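(* Let $f:X\to X$ be a continuous map on a metric space $(X,d)$. The following are equivalent: (i) $(\mathcal{K}(X),\overline f)$ has the specification property; (ii) $(\mathcal{F}_\infty(X),\hat f)$ has the specification property; (iii) $(\mathcal{F}_0(X),\hat f)$ has the specification property; (iv) $(\mathcal{F}_S(X),\hat f)$ has the specification property; (v) $(\mathcal{F}_E(X),\hat f)$ has the specification property.
   Context: A continuous map $g$ on a metric space $(Y,\rho)$ has the specification property if for every $\varepsilon>0$ there is $N_\varepsilon\in\mathbb{N}$ such that for every integer $s\ge2$, every $y_1,\dots,y_s\in Y$ and every integers $0=i_1\le j_1<i_2\le j_2<\dots<i_s\le j_s$ with $i_{r+1}-j_r\ge N_\varepsilon$ for $1\le r<s$, there is $x\in Y$ with $\rho(g^j(x),g^j(y_r))<\varepsilon$ for all $1\le r\le s$ and $i_r\le j\le j_r$, and $g^{N_\varepsilon+j_s}(x)=x$. $\mathbb{I}=[0,1]$. Fuzzy setting: for $u:X\to\mathbb{I}$, $u_\alpha=\{x:u(x)\ge\alpha\}$ ($\alpha\in]0,1]$), $u_0=\overline{\{x:u(x)>0\}}$. $\mathcal{F}(X)$: upper-semicontinuous $u:X\to\mathbb{I}$ with $u_0$ compact and $u_1\ne\varnothing$. $\mathcal{K}(X)$: non-empty compact subsets with Hausdorff metric $d_H$; $\overline f(K)=f(K)$. Zadeh extension: $\hat f(u)(x)=\sup\{u(y):f(y)=x\}$ (and $0$ if $f^{-1}(\{x\})=\varnothing$). Metrics on $\mathcal{F}(X)$: $d_\infty(u,v)=\sup_{\alpha\in\mathbb{I}}d_H(u_\alpha,v_\alpha)$;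 $d_0(u,v)=\inf\{\varepsilon>0:\exists\xi\in\mathcal{T},\ \sup_\alpha|\xi(\alpha)-\alpha|\le\varepsilon,\ d_\infty(u,\xi\circ v)\le\varepsilon\}$ with $\mathcal{T}$ the strictly increasing homeomorphisms of $\mathbb{I}$; with $\overline d((x,\alpha),(y,\beta))=\max\{d(x,y),|\alpha-\beta|\}$, $\operatorname{end}(u)=\{(x,\alpha):u(x)\ge\alpha\}$, $\operatorname{send}(u)=\operatorname{end}(u)\cap(u_0\times\mathbb{I})$, $d_E$ and $d_S$ are the $\overline d$-Hausdorff distances of endographs and sendographs respectively. $\mathcal{F}_\rho(X)$ denotes $(\mathcal{F}(X),\rho)$. *)

theory Defs
  imports "HOL-Analysis.Analysis"
begin

definition spec_prop :: "'b set \<Rightarrow> ('b \<Rightarrow> 'b \<Rightarrow> real) \<Rightarrow> ('b \<Rightarrow> 'b) \<Rightarrow> bool" where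
  "spec_prop Y \<rho> g \<longleftrightarrow>
     (\<forall>\<epsilon>>0. \<exists>N::nat. N \<ge> 1 \<and>
        (\<forall>(s::nat) (y::nat \<Rightarrow> 'b) (i::nat \<Rightarrow> nat) (j::nat \<Rightarrow> nat).
           s \<ge> 2 \<and> (\<forall>r\<in>{1..s}. y r \<in> Y) \<and> i 1 = 0 \<and>
           (\<forall>r\<in>{1..s}. i r \<le> j r) \<and>
           (\<forall>r\<in>{1..<s}. j r < i (r + 1) \<and> N \<le> i (r + 1) - j r)
           \<longrightarrow> (\<exists>x\<in>Y. (\<forall>r\<in>{1..s}. \<forall>k\<in>{i r..j r}. \<rho> ((g ^^ k) x) ((g ^^ k) (y r)) < \<epsilon>)
                     \<and> (g ^^ (N + j s)) x = x)))"

text \<open>Hausdorff distance w.r.t. an arbitrary metric rho (used on non-empty sets).\<close>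
definition hdist :: "('b \<Rightarrow> 'b \<Rightarrow> real) \<Rightarrow> 'b set \<Rightarrow> 'b set \<Rightarrow> real" where
  "hdist \<rho> A B = max (SUP a\<in>A. INF b\<in>B. \<rho> a b) (SUP b\<in>B. INF a\<in>A. \<rho> a b)"

definition Kspace :: "'a::metric_space set set" where
  "Kspace = {K. compact K \<and> K \<noteq> {}}"

definition dH :: "'a::metric_space set \<Rightarrow> 'a set \<Rightarrow> real" where
  "dH = hdist dist"

definition fbar :: "('a \<Rightarrow> 'a) \<Rightarrow> 'a set \<Rightarrow> 'a set" where
  "fbar f K = f ` K"

definition level :: "('a::topological_space \<Rightarrow> real) \<Rightarrow> real \<Rightarrow> 'a set" where
  "level u \<alpha> = (if \<alpha> = 0 then closure {x. u x > 0} else {x. u x \<ge> \<alpha>})"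

definition usc :: "('a::topological_space \<Rightarrow> real) \<Rightarrow> bool" where
  "usc u \<longleftrightarrow> (\<forall>a. open {x. u x < a})"

definition Fspace :: "('a::metric_space \<Rightarrow> real) set" where
  "Fspace = {u. (\<forall>x. 0 \<le> u x \<and> u x \<le> 1) \<and> usc u \<and> compact (level u 0) \<and> level u 1 \<noteq> {}}"

definition zadeh :: "('a \<Rightarrow> 'a) \<Rightarrow> ('a \<Rightarrow> real) \<Rightarrow> ('a \<Rightarrow> real)" where
  "zadeh f u x = (if f -` {x} = {} then 0 else Sup (u ` (f -` {x})))"

definition d_inf :: "('a::metric_space \<Rightarrow> real) \<Rightarrow> ('a \<Rightarrow> real) \<Rightarrow> real" where
  "d_inf u v = (SUP \<alpha>\<in>{0..1}. dH (level u \<alpha>) (level v \<alpha>))"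

definition Tset :: "(real \<Rightarrow> real) set" where
  "Tset = {\<xi>. strict_mono_on {0..1} \<xi> \<and> (\<exists>\<eta>. homeomorphism {0..1} {0..1} \<xi> \<eta>)}"

definition d_0 :: "('a::metric_space \<Rightarrow> real) \<Rightarrow> ('a \<Rightarrow> real) \<Rightarrow> real" where
  "d_0 u v = Inf {\<epsilon>. \<epsilon> > 0 \<and> (\<exists>\<xi>\<in>Tset. (\<forall>\<alpha>\<in>{0..1}. \<bar>\<xi> \<alpha> - \<alpha>\<bar> \<le> \<epsilon>) \<and> d_inf u (\<xi> \<circ> v) \<le> \<epsilon>)}"

definition dbar :: "('a::metric_space \<times> real) \<Rightarrow> ('a \<times> real) \<Rightarrow> real" where
  "dbar p q = max (dist (fst p) (fst q)) \<bar>snd p - snd q\<bar>"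

definition endo :: "('a::topological_space \<Rightarrow> real) \<Rightarrow> ('a \<times> real) set" where
  "endo u = {(x, \<alpha>). \<alpha> \<in> {0..1} \<and> u x \<ge> \<alpha>}"

definition sendo :: "('a::topological_space \<Rightarrow> real) \<Rightarrow> ('a \<times> real) set" where
  "sendo u = endo u \<inter> (level u 0 \<times> {0..1})"

definition d_E :: "('a::metric_space \<Rightarrow> real) \<Rightarrow> ('a \<Rightarrow> real) \<Rightarrow> real" where
  "d_E u v = hdist dbar (endo u) (endo v)"

definition d_S :: "('a::metric_space \<Rightarrow> real) \<Rightarrow> ('a \<Rightarrow> real) \<Rightarrow> real" where
  "d_S u v = hdist dbar (sendo u) (sendo v)"

end

theory Submission
  imports Defs
begin


lemma usc_closed: "usc u \<Longrightarrow> closed {x. u x \<ge> a}"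
proof -
  assume "usc u"
  then have "open {x. u x < a}" by (simp add: usc_def)
  moreover have "{x. u x \<ge> a} = - {x. u x < a}" by auto
  ultimately show ?thesis by (simp add: closed_def)
qed

lemma closed_usc: "(\<And>a. closed {x. u x \<ge> a}) \<Longrightarrow> usc u"
proof -
  assume h: "\<And>a. closed {x. u x \<ge> a}"
  have "{x. u x < a} = - {x. u x \<ge> a}" for a by auto
  then show ?thesis using h by (simp add: usc_def open_closed)
qed

lemma level_pos: "\<alpha> \<noteq> 0 \<Longrightarrow> level u \<alpha> = {x. u x \<ge> \<alpha>}"
  by (simp add: level_def)

lemma level_zero: "level u 0 = closure {x. u x > 0}"
  by (simp add: level_def)

lemma FspaceD:
  assumes "u \<in> Fspace"
  shows "\<And>x. 0 \<le> u x" "\<And>x. u x \<le> 1" "usc u" "compact (level u 0)" "level u 1 \<noteq> {}"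
  using assms by (auto simp: Fspace_def)

lemma level_sub0:
  assumes "u \<in> Fspace" "0 \<le> \<alpha>"
  shows "level u \<alpha> \<subseteq> level u 0"
proof (cases "\<alpha> = 0")
  case False
  then have "level u \<alpha> \<subseteq> {x. u x > 0}" using assms by (auto simp: level_def)
  then show ?thesis using closure_subset[of "{x. u x > 0}"] by (auto simp: level_def)
qed simp

lemma level_mono:
  assumes "u \<in> Fspace" "0 \<le> \<alpha>" "\<alpha> \<le> \<beta>"
  shows "level u \<beta> \<subseteq> level u \<alpha>"
proof (cases "\<alpha> = 0")
  case True then show ?thesis using level_sub0[OF assms(1)] assms by auto
next
  case False then show ?thesis using assms by (auto simp: level_def)
qed

lemma level_compact:
  assumes "u \<in> Fspace" "0 \<le> \<alpha>"
  shows "compact (level u \<alpha>)"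
proof (cases "\<alpha> = 0")
  case True then show ?thesis using FspaceD[OF assms(1)] by simp
next
  case False
  have "level u \<alpha> = level u 0 \<inter> {x. u x \<ge> \<alpha>}"
    using level_sub0[OF assms] False by (auto simp: level_def)
  then show ?thesis using FspaceD[OF assms(1)] usc_closed by (metis compact_Int_closed)
qed

lemma level_nonempty:
  assumes "u \<in> Fspace" "0 \<le> \<alpha>" "\<alpha> \<le> 1"
  shows "level u \<alpha> \<noteq> {}"
  using level_mono[OF assms] FspaceD(5)[OF assms(1)] by auto

lemma level_bounded:
  assumes "u \<in> Fspace" "0 \<le> \<alpha>"
  shows "bounded (level u \<alpha>)"
  using level_compact[OF assms] compact_imp_bounded by auto

lemma hdist_le:
  assumes "A \<noteq> {}" "B \<noteq> {}" "\<And>a b. 0 \<le> \<rho> a b"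
    "\<forall>a\<in>A. \<exists>b\<in>B. \<rho> a b \<le> c" "\<forall>b\<in>B. \<exists>a\<in>A. \<rho> a b \<le> c"
  shows "hdist \<rho> A B \<le> c"
proof -
  have bb: "bdd_below (f ` S)" if "\<And>x. 0 \<le> f x" for f :: "'z \<Rightarrow> real" and S
    using that by (auto intro!: bdd_belowI[of _ 0])
  have 1: "(SUP a\<in>A. INF b\<in>B. \<rho> a b) \<le> c"
  proof (rule cSUP_least[OF assms(1)])
    fix a assume "a \<in> A"
    then obtain b where "b \<in> B" "\<rho> a b \<le> c" using assms(4) by blast
    then show "(INF b\<in>B. \<rho> a b) \<le> c" using bb[of "\<rho> a"] assms(3) by (meson cINF_lower2)
  qed
  have 2: "(SUP b\<in>B. INF a\<in>A. \<rho> a b) \<le> c"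
  proof (rule cSUP_least[OF assms(2)])
    fix b assume "b \<in> B"
    then obtain a where "a \<in> A" "\<rho> a b \<le> c" using assms(5) by blast
    then show "(INF a\<in>A. \<rho> a b) \<le> c" using bb[of "\<lambda>a. \<rho> a b"] assms(3) by (meson cINF_lower2)
  qed
  show ?thesis using 1 2 by (simp add: hdist_def)
qed

lemma hdist_lt:
  assumes "A \<noteq> {}" "B \<noteq> {}" "\<And>a b. 0 \<le> \<rho> a b"
    "\<forall>a\<in>A. \<exists>b\<in>B. \<rho> a b \<le> C1" "\<forall>b\<in>B. \<exists>a\<in>A. \<rho> a b \<le> C2"
    "hdist \<rho> A B < \<delta>"
  shows "\<forall>a\<in>A. \<exists>b\<in>B. \<rho> a b < \<delta>" "\<forall>b\<in>B. \<exists>a\<in>A. \<rho> a b < \<delta>"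
proof -
  have bb: "bdd_below (f ` S)" if "\<And>x. 0 \<le> f x" for f :: "'z \<Rightarrow> real" and S
    using that by (auto intro!: bdd_belowI[of _ 0])
  have ba1: "bdd_above ((\<lambda>a. INF b\<in>B. \<rho> a b) ` A)"
  proof (rule bdd_aboveI2)
    fix a assume "a \<in> A"
    then obtain b where "b \<in> B" "\<rho> a b \<le> C1" using assms(4) by blast
    then show "(INF b\<in>B. \<rho> a b) \<le> C1" using bb[of "\<rho> a"] assms(3) by (meson cINF_lower2)
  qed
  have ba2: "bdd_above ((\<lambda>b. INF a\<in>A. \<rho> a b) ` B)"
  proof (rule bdd_aboveI2)
    fix b assume "b \<in> B"
    then obtain a where "a \<in> A" "\<rho> a b \<le> C2" using assms(5) by blast
    then show "(INF a\<in>A. \<rho> a b) \<le> C2" using bb[of "\<lambda>a. \<rho> a b"] assms(3) by (meson cINF_lower2)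
  qed
  show "\<forall>a\<in>A. \<exists>b\<in>B. \<rho> a b < \<delta>"
  proof
    fix a assume a: "a \<in> A"
    have "(INF b\<in>B. \<rho> a b) \<le> (SUP a\<in>A. INF b\<in>B. \<rho> a b)"
      using cSUP_upper[OF a ba1] .
    also have "\<dots> \<le> hdist \<rho> A B" by (simp add: hdist_def)
    finally have "(INF b\<in>B. \<rho> a b) < \<delta>" using assms(6) by linarith
    then show "\<exists>b\<in>B. \<rho> a b < \<delta>" using cInf_lessD[of "\<rho> a ` B"] assms(2) by auto
  qed
  show "\<forall>b\<in>B. \<exists>a\<in>A. \<rho> a b < \<delta>"
  proof
    fix b assume b: "b \<in> B"
    have "(INF a\<in>A. \<rho> a b) \<le> (SUP b\<in>B. INF a\<in>A. \<rho> a b)"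
      using cSUP_upper[OF b ba2] .
    also have "\<dots> \<le> hdist \<rho> A B" by (simp add: hdist_def)
    finally have "(INF a\<in>A. \<rho> a b) < \<delta>" using assms(6) by linarith
    then show "\<exists>a\<in>A. \<rho> a b < \<delta>" using cInf_lessD[of "(\<lambda>a. \<rho> a b) ` A"] assms(1) by auto
  qed
qed

lemma bounded_dist_bound:
  assumes "bounded (A \<union> B)"
  shows "\<exists>C. \<forall>a\<in>A. \<forall>b\<in>B. dist a b \<le> C"
proof -
  obtain z e where e: "\<forall>y\<in>A \<union> B. dist z y \<le> e" using assms by (auto simp: bounded_def)
  show ?thesis
  proof (intro exI ballI)
    fix a b assume "a \<in> A" "b \<in> B"
    then have "dist z a \<le> e" "dist z b \<le> e" using e by auto
    then show "dist a b \<le> 2 * e" using dist_triangle3[of a b z] by linarith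
  qed
qed

lemma dH_lt:
  assumes "A \<noteq> {}" "B \<noteq> {}" "bounded (A \<union> B)" "dH A B < \<delta>"
  shows "\<forall>a\<in>A. \<exists>b\<in>B. dist a b < \<delta>" "\<forall>b\<in>B. \<exists>a\<in>A. dist a b < \<delta>"
proof -
  obtain C where C: "\<forall>a\<in>A. \<forall>b\<in>B. dist a b \<le> C" using bounded_dist_bound[OF assms(3)] by blast
  have 1: "\<forall>a\<in>A. \<exists>b\<in>B. dist a b \<le> C" using C assms(2) by blast
  have 2: "\<forall>b\<in>B. \<exists>a\<in>A. dist a b \<le> C" using C assms(1) by blast
  show "\<forall>a\<in>A. \<exists>b\<in>B. dist a b < \<delta>" "\<forall>b\<in>B. \<exists>a\<in>A. dist a b < \<delta>"
    using hdist_lt[OF assms(1,2) zero_le_dist 1 2] assms(4) by (auto simp: dH_def)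
qed

lemma dH_le:
  assumes "A \<noteq> {}" "B \<noteq> {}"
    "\<forall>a\<in>A. \<exists>b\<in>B. dist a b \<le> c" "\<forall>b\<in>B. \<exists>a\<in>A. dist a b \<le> c"
  shows "dH A B \<le> c"
  using hdist_le[OF assms(1,2) zero_le_dist assms(3,4)] by (simp add: dH_def)

lemma dH_bound:
  assumes "A \<noteq> {}" "B \<noteq> {}" "bounded (A \<union> B)"
  shows "\<exists>C. dH A B \<le> C"
proof -
  obtain C where C: "\<forall>a\<in>A. \<forall>b\<in>B. dist a b \<le> C" using bounded_dist_bound[OF assms(3)] by blast
  show ?thesis using dH_le[OF assms(1,2)] C assms(1,2) by blast
qed



lemma usc_max_lt:
  assumes "compact K" "usc u" "\<forall>y\<in>K. u y < \<alpha>"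
  shows "\<exists>c<\<alpha>. \<forall>y\<in>K. u y < c"
proof -
  have cov: "K \<subseteq> (\<Union>c\<in>{c. c < \<alpha>}. {x. u x < c})"
  proof
    fix y assume "y \<in> K"
    then have "u y < (u y + \<alpha>) / 2" "(u y + \<alpha>) / 2 < \<alpha>" using assms(3) by auto
    then show "y \<in> (\<Union>c\<in>{c. c < \<alpha>}. {x. u x < c})" by blast
  qed
  have op: "open {x. u x < c}" for c using assms(2) by (simp add: usc_def)
  obtain C' where C': "C' \<subseteq> {c. c < \<alpha>}" "finite C'" "K \<subseteq> (\<Union>c\<in>C'. {x. u x < c})"
    using compactE_image[OF assms(1) op cov] by blast
  define m where "m = Max (insert (\<alpha> - 1) C')"
  have "m \<in> insert (\<alpha> - 1) C'" unfolding m_def using C'(2) by (intro Max_in) auto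
  then have m1: "m < \<alpha>" using C'(1) by auto
  have m2: "c \<le> m" if "c \<in> C'" for c unfolding m_def using C'(2) that by auto
  show ?thesis
  proof (intro exI conjI ballI)
    show "m < \<alpha>" by (rule m1)
    fix y assume "y \<in> K"
    then obtain c where "c \<in> C'" "u y < c" using C'(3) by blast
    then show "u y < m" using m2 by fastforce
  qed
qed

context
  fixes f :: "'a::metric_space \<Rightarrow> 'a"
  assumes contf: "continuous_on UNIV f"
begin

lemma zadeh_range:
  assumes "u \<in> Fspace"
  shows "0 \<le> zadeh f u x" "zadeh f u x \<le> 1"
proof -
  have b: "bdd_above (u ` (f -` {x}))" using FspaceD(2)[OF assms] by (auto intro!: bdd_aboveI[of _ 1])
  show "0 \<le> zadeh f u x"
  proof (cases "f -` {x} = {}")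
    case False
    then obtain y where "y \<in> f -` {x}" by blast
    then have "u y \<le> Sup (u ` (f -` {x}))" using cSup_upper[OF _ b] by auto
    then show ?thesis using FspaceD(1)[OF assms, of y] False by (simp add: zadeh_def)
  qed (simp add: zadeh_def)
  show "zadeh f u x \<le> 1"
  proof (cases "f -` {x} = {}")
    case False
    then have "Sup (u ` (f -` {x})) \<le> 1" using FspaceD(2)[OF assms] by (intro cSup_least) auto
    then show ?thesis using False by (simp add: zadeh_def)
  qed (simp add: zadeh_def)
qed

lemma zadeh_ge:
  assumes "u \<in> Fspace" "\<alpha> > 0"
  shows "zadeh f u x \<ge> \<alpha> \<longleftrightarrow> (\<exists>y. f y = x \<and> u y \<ge> \<alpha>)"
proof
  have b: "bdd_above (u ` (f -` {x}))" using FspaceD(2)[OF assms(1)] by (auto intro!: bdd_aboveI[of _ 1])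
  assume "\<exists>y. f y = x \<and> u y \<ge> \<alpha>"
  then obtain y where y: "f y = x" "u y \<ge> \<alpha>" by blast
  then have "u y \<le> Sup (u ` (f -` {x}))" using cSup_upper[OF _ b] by auto
  then show "zadeh f u x \<ge> \<alpha>" using y by (auto simp: zadeh_def)
next
  assume za: "zadeh f u x \<ge> \<alpha>"
  show "\<exists>y. f y = x \<and> u y \<ge> \<alpha>"
  proof (rule ccontr)
    assume nc: "\<not> ?thesis"
    have ne: "f -` {x} \<noteq> {}" using za assms(2) by (auto simp: zadeh_def split: if_splits)
    have cl: "closed (f -` {x})" using continuous_closed_vimage[OF closed_singleton] contf
      by (metis continuous_on_eq_continuous_within closed_vimage continuous_on_closed_vimage
          closed_closure closed_singleton  open_UNIV  closedin_closed_Int)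
    define K where "K = f -` {x} \<inter> level u (\<alpha>/2)"
    have cK: "compact K" unfolding K_def using level_compact[OF assms(1), of "\<alpha>/2"] assms(2) cl
      by (metis Int_commute compact_Int_closed less_eq_real_def half_gt_zero)
    have "\<forall>y\<in>K. u y < \<alpha>" using nc unfolding K_def by auto
    then obtain c where c: "c < \<alpha>" "\<forall>y\<in>K. u y < c" using usc_max_lt[OF cK FspaceD(3)[OF assms(1)]] by blast
    have "\<forall>y\<in>f -` {x}. u y \<le> max c (\<alpha>/2)"
    proof
      fix y assume y: "y \<in> f -` {x}"
      show "u y \<le> max c (\<alpha>/2)"
      proof (cases "u y \<ge> \<alpha>/2")
        case True
        then have "y \<in> K" using y assms(2) by (auto simp: K_def level_def)
        then show ?thesis using c by force
      qed auto
    qed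
    then have "Sup (u ` (f -` {x})) \<le> max c (\<alpha>/2)" using ne by (intro cSup_least) auto
    then show False using za c assms(2) ne by (auto simp: zadeh_def)
  qed
qed

lemma zadeh_level_pos:
  assumes "u \<in> Fspace" "\<alpha> > 0"
  shows "level (zadeh f u) \<alpha> = f ` level u \<alpha>"
  using zadeh_ge[OF assms] assms(2) by (auto simp: level_def)

lemma zadeh_pos_set:
  assumes "u \<in> Fspace"
  shows "{x. zadeh f u x > 0} = f ` {x. u x > 0}"
proof safe
  fix x assume "0 < zadeh f u x"
  then obtain y where "f y = x" "u y \<ge> zadeh f u x" using zadeh_ge[OF assms] by blast
  then show "x \<in> f ` {x. 0 < u x}" using \<open>0 < zadeh f u x\<close> by force
next
  fix y assume "0 < u y"
  then have "zadeh f u (f y) \<ge> u y" using zadeh_ge[OF assms] by blast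
  then show "0 < zadeh f u (f y)" using \<open>0 < u y\<close> by linarith
qed

lemma zadeh_level_zero:
  assumes "u \<in> Fspace"
  shows "level (zadeh f u) 0 = f ` level u 0"
proof
  have "f ` level u 0 = f ` closure {x. u x > 0}" by (simp add: level_def)
  also have "\<dots> \<subseteq> closure (f ` {x. u x > 0})"
  proof (rule image_closure_subset)
    show "continuous_on (closure {x. u x > 0}) f" using continuous_on_subset[OF contf] by blast
    show "f ` {x. u x > 0} \<subseteq> closure (f ` {x. u x > 0})" by (rule closure_subset)
  qed simp
  finally show "f ` level u 0 \<subseteq> level (zadeh f u) 0" using zadeh_pos_set[OF assms] by (simp add: level_def)
next
  have "compact (f ` level u 0)"
    using compact_continuous_image[OF continuous_on_subset[OF contf] FspaceD(4)[OF assms]] by auto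
  then have "closed (f ` level u 0)" by (rule compact_imp_closed)
  moreover have "f ` {x. u x > 0} \<subseteq> f ` level u 0"
    using closure_subset[of "{x. u x > 0}"] by (auto simp: level_def)
  ultimately have "closure (f ` {x. u x > 0}) \<subseteq> f ` level u 0" by (rule closure_minimal[rotated])
  then show "level (zadeh f u) 0 \<subseteq> f ` level u 0" using zadeh_pos_set[OF assms] by (simp add: level_def)
qed

lemma zadeh_level:
  assumes "u \<in> Fspace" "\<alpha> \<ge> 0"
  shows "level (zadeh f u) \<alpha> = f ` level u \<alpha>"
  using zadeh_level_pos[OF assms(1)] zadeh_level_zero[OF assms(1)] assms(2)
  by (cases "\<alpha> = 0") auto

lemma zadeh_F:
  assumes "u \<in> Fspace"
  shows "zadeh f u \<in> Fspace"
proof -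
  have usc: "usc (zadeh f u)"
  proof (rule closed_usc)
    fix a
    show "closed {x. zadeh f u x \<ge> a}"
    proof (cases "a > 0")
      case True
      then have "{x. zadeh f u x \<ge> a} = f ` level u a" using zadeh_level_pos[OF assms True] by (simp add: level_def)
      moreover have "compact (f ` level u a)"
        using compact_continuous_image[OF continuous_on_subset[OF contf] level_compact[OF assms]] True by auto
      ultimately show ?thesis by (simp add: compact_imp_closed)
    next
      case False
      have "a \<le> zadeh f u x" for x using zadeh_range(1)[OF assms, of x] False by linarith
      then have "{x. zadeh f u x \<ge> a} = UNIV" by auto
      then show ?thesis by simp
    qed
  qed
  have "compact (level (zadeh f u) 0)" unfolding zadeh_level_zero[OF assms]
    using compact_continuous_image[OF continuous_on_subset[OF contf] FspaceD(4)[OF assms]] by auto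
  moreover have "level (zadeh f u) 1 \<noteq> {}" using zadeh_level_pos[OF assms, of 1] FspaceD(5)[OF assms] by auto
  ultimately show ?thesis using usc zadeh_range[OF assms] by (auto simp: Fspace_def)
qed

lemma zadeh_pow:
  assumes "u \<in> Fspace"
  shows "(zadeh f ^^ k) u \<in> Fspace \<and> (\<forall>\<alpha>\<ge>0. level ((zadeh f ^^ k) u) \<alpha> = (f ^^ k) ` level u \<alpha>)"
proof (induction k)
  case 0 then show ?case using assms by simp
next
  case (Suc k)
  then have F: "(zadeh f ^^ k) u \<in> Fspace" by blast
  show ?case
  proof (intro conjI allI impI)
    show "(zadeh f ^^ Suc k) u \<in> Fspace" using zadeh_F[OF F] by simp
    fix \<alpha> :: real assume "\<alpha> \<ge> 0"
    then show "level ((zadeh f ^^ Suc k) u) \<alpha> = (f ^^ Suc k) ` level u \<alpha>"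
      using zadeh_level[OF F] Suc.IH by (simp add: image_comp)
  qed
qed

lemma zadeh_pow_F: "u \<in> Fspace \<Longrightarrow> (zadeh f ^^ k) u \<in> Fspace"
  using zadeh_pow by blast

lemma zadeh_pow_level: "u \<in> Fspace \<Longrightarrow> \<alpha> \<ge> 0 \<Longrightarrow> level ((zadeh f ^^ k) u) \<alpha> = (f ^^ k) ` level u \<alpha>"
  using zadeh_pow by blast

end

lemma fbar_pow: "(fbar f ^^ k) K = (f ^^ k) ` K"
  by (induction k) (auto simp: fbar_def image_comp)

lemma F_eqI:
  assumes "u \<in> Fspace" "v \<in> Fspace" "\<And>\<alpha>. \<alpha> > 0 \<Longrightarrow> level u \<alpha> = level v \<alpha>"
  shows "u = v"
proof -
  have le: "p x \<le> q x" if "p \<in> Fspace" "q \<in> Fspace" "\<And>\<alpha>. \<alpha> > 0 \<Longrightarrow> level p \<alpha> = level q \<alpha>" for p q x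
  proof (cases "p x > 0")
    case True
    have "x \<in> level p (p x)" using True by (simp add: level_def)
    then have "x \<in> level q (p x)" using that(3)[OF True] by simp
    then show ?thesis using True by (simp add: level_def)
  next
    case False then show ?thesis using FspaceD(1)[OF that(2), of x] by linarith
  qed
  show ?thesis using le[OF assms] le[OF assms(2,1)] assms(3) by (intro ext antisym) auto
qed

definition chi :: "'a set \<Rightarrow> 'a \<Rightarrow> real" where
  "chi K = (\<lambda>x. if x \<in> K then 1 else 0)"

lemma level_chi:
  assumes "closed K" "0 \<le> \<alpha>" "\<alpha> \<le> 1"
  shows "level (chi K) \<alpha> = K"
proof (cases "\<alpha> = 0")
  case True
  have "{x. chi K x > 0} = K" by (auto simp: chi_def)
  then show ?thesis using True assms by (simp add: level_def)
next
  case False then show ?thesis using assms by (auto simp: level_def chi_def)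
qed

lemma chi_F:
  assumes "K \<in> Kspace"
  shows "chi K \<in> Fspace"
proof -
  have c: "compact K" "K \<noteq> {}" using assms by (auto simp: Kspace_def)
  have "closed {x. chi K x \<ge> a}" for a
  proof -
    have "{x. chi K x \<ge> a} = (if a \<le> 0 then UNIV else if a \<le> 1 then K else {})"
      by (auto simp: chi_def)
    then show ?thesis using compact_imp_closed[OF c(1)] by simp
  qed
  then have "usc (chi K)" by (rule closed_usc)
  then show ?thesis using level_chi[OF compact_imp_closed[OF c(1)]] c by (auto simp: Fspace_def chi_def)
qed

lemma zadeh_pow_chi:
  assumes "continuous_on UNIV f" "K \<in> Kspace"
  shows "(zadeh f ^^ k) (chi K) = chi ((f ^^ k) ` K)"
proof -
  have cont: "continuous_on UNIV (f ^^ k)"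
    by (induction k) (auto intro!: continuous_on_compose2[OF assms(1)] continuous_on_id)
  have K: "compact K" "K \<noteq> {}" using assms(2) by (auto simp: Kspace_def)
  have fK: "(f ^^ k) ` K \<in> Kspace"
    using compact_continuous_image[OF continuous_on_subset[OF cont] K(1)] K by (auto simp: Kspace_def)
  show ?thesis
  proof (rule F_eqI)
    show "(zadeh f ^^ k) (chi K) \<in> Fspace" by (rule zadeh_pow_F[OF assms(1) chi_F[OF assms(2)]])
    show "chi ((f ^^ k) ` K) \<in> Fspace" by (rule chi_F[OF fK])
    fix \<alpha> :: real assume a: "\<alpha> > 0"
    show "level ((zadeh f ^^ k) (chi K)) \<alpha> = level (chi ((f ^^ k) ` K)) \<alpha>"
    proof (cases "\<alpha> \<le> 1")
      case True
      have c2: "closed ((f ^^ k) ` K)" using fK compact_imp_closed by (auto simp: Kspace_def)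
      show ?thesis using zadeh_pow_level[OF assms(1) chi_F[OF assms(2)], of \<alpha> k] a True
          level_chi[OF compact_imp_closed[OF K(1)], of \<alpha>] level_chi[OF c2, of \<alpha>]
        by simp
    next
      case False
      have "level ((zadeh f ^^ k) (chi K)) \<alpha> = {}"
        using zadeh_pow_level[OF assms(1) chi_F[OF assms(2)], of \<alpha> k] a False
        by (auto simp: level_def chi_def)
      moreover have "level (chi ((f ^^ k) ` K)) \<alpha> = {}" using a False by (auto simp: level_def chi_def)
      ultimately show ?thesis by simp
    qed
  qed
qed



definition spec_concl where
  "spec_concl Y \<rho> g \<epsilon> N s y i j \<longleftrightarrow> (\<exists>x\<in>Y. (\<forall>r\<in>{1..s}. \<forall>k\<in>{i r..j r}. \<rho> ((g ^^ k) x) ((g ^^ k) (y r)) < \<epsilon>)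
                     \<and> (g ^^ (N + j s)) x = x)"

definition spec_hyp where
  "spec_hyp Y N s y i j \<longleftrightarrow> s \<ge> 2 \<and> (\<forall>r\<in>{1..s}. y r \<in> Y) \<and> i (1::nat) = (0::nat) \<and>
           (\<forall>r\<in>{1..s}. i r \<le> j r) \<and>
           (\<forall>r\<in>{1..<s}. j r < i (r + 1) \<and> N \<le> i (r + 1) - j r)"

lemma spec_prop_alt:
  "spec_prop Y \<rho> g \<longleftrightarrow> (\<forall>\<epsilon>>0. \<exists>N::nat. N \<ge> 1 \<and> (\<forall>s y i j. spec_hyp Y N s y i j \<longrightarrow> spec_concl Y \<rho> g \<epsilon> N s y i j))"
  unfolding spec_prop_def spec_hyp_def spec_concl_def by (rule refl)

lemma spec_transfer:
  assumes "spec_prop Y \<rho>1 g" "\<forall>a\<in>Y. g a \<in> Y"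
    "\<And>a b \<epsilon>. a \<in> Y \<Longrightarrow> b \<in> Y \<Longrightarrow> 0 < \<epsilon> \<Longrightarrow> \<rho>1 a b < \<epsilon> \<Longrightarrow> \<rho>2 a b < \<epsilon>"
  shows "spec_prop Y \<rho>2 g"
proof -
  have pow: "(g ^^ k) a \<in> Y" if "a \<in> Y" for a k using that assms(2) by (induction k) auto
  have c: "spec_concl Y \<rho>2 g \<epsilon> N s y i j" if H: "spec_hyp Y N s y i j" "spec_concl Y \<rho>1 g \<epsilon> N s y i j" "0 < \<epsilon>"
    for \<epsilon> N s y i j
  proof -
    obtain x where x: "x \<in> Y" "\<forall>r\<in>{1..s}. \<forall>k\<in>{i r..j r}. \<rho>1 ((g ^^ k) x) ((g ^^ k) (y r)) < \<epsilon>"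
        "(g ^^ (N + j s)) x = x" using H(2) unfolding spec_concl_def by blast
    have y: "\<forall>r\<in>{1..s}. y r \<in> Y" using H(1) unfolding spec_hyp_def by blast
    have "\<forall>r\<in>{1..s}. \<forall>k\<in>{i r..j r}. \<rho>2 ((g ^^ k) x) ((g ^^ k) (y r)) < \<epsilon>"
    proof (intro ballI)
      fix r k assume r: "r \<in> {1..s}" and k: "k \<in> {i r..j r}"
      show "\<rho>2 ((g ^^ k) x) ((g ^^ k) (y r)) < \<epsilon>"
        by (rule assms(3)[OF pow[OF x(1)] pow[OF y[rule_format, OF r]] H(3) x(2)[rule_format, OF r k]])
    qed
    then show ?thesis unfolding spec_concl_def using x(1,3) by blast
  qed
  show ?thesis
    using assms(1) c unfolding spec_prop_alt by meson
qed

lemma d_inf_ge: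
  assumes "u \<in> Fspace" "v \<in> Fspace" "0 \<le> \<alpha>" "\<alpha> \<le> 1"
  shows "dH (level u \<alpha>) (level v \<alpha>) \<le> d_inf u v"
proof -
  have bu: "bounded (level u 0 \<union> level v 0)"
    using level_bounded[OF assms(1), of 0] level_bounded[OF assms(2), of 0] by simp
  obtain C where C: "\<forall>a\<in>level u 0. \<forall>b\<in>level v 0. dist a b \<le> C"
    using bounded_dist_bound[OF bu] by blast
  have "dH (level u \<beta>) (level v \<beta>) \<le> C" if b: "\<beta> \<in> {0..1}" for \<beta>
  proof -
    have n1: "level u \<beta> \<noteq> {}" using level_nonempty[OF assms(1)] b by simp
    have n2: "level v \<beta> \<noteq> {}" using level_nonempty[OF assms(2)] b by simp
    obtain a where a: "a \<in> level u \<beta>" using n1 by blast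
    obtain b' where b': "b' \<in> level v \<beta>" using n2 by blast
    have s1: "level u \<beta> \<subseteq> level u 0" using level_sub0[OF assms(1)] b by simp
    have s2: "level v \<beta> \<subseteq> level v 0" using level_sub0[OF assms(2)] b by simp
    have h1: "\<forall>a\<in>level u \<beta>. \<exists>b\<in>level v \<beta>. dist a b \<le> C"
    proof
      fix x assume "x \<in> level u \<beta>"
      then have "dist x b' \<le> C" using C s1 s2 b' by auto
      then show "\<exists>b\<in>level v \<beta>. dist x b \<le> C" using b' by auto
    qed
    have h2: "\<forall>b\<in>level v \<beta>. \<exists>a\<in>level u \<beta>. dist a b \<le> C"
    proof
      fix x assume "x \<in> level v \<beta>"
      then have "dist a x \<le> C" using C s1 s2 a by auto
      then show "\<exists>a\<in>level u \<beta>. dist a x \<le> C" using a by auto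
    qed
    show ?thesis by (rule dH_le[OF n1 n2 h1 h2])
  qed
  then have "bdd_above ((\<lambda>\<beta>. dH (level u \<beta>) (level v \<beta>)) ` {0..1})" by (intro bdd_aboveI2) auto
  moreover have "\<alpha> \<in> {0..1}" using assms by simp
  ultimately show ?thesis unfolding d_inf_def by (rule cSUP_upper[rotated])
qed

lemma d_inf_lt_close:
  assumes "u \<in> Fspace" "v \<in> Fspace" "0 \<le> \<alpha>" "\<alpha> \<le> 1" "d_inf u v < \<delta>"
  shows "\<forall>a\<in>level u \<alpha>. \<exists>b\<in>level v \<alpha>. dist a b < \<delta>" "\<forall>b\<in>level v \<alpha>. \<exists>a\<in>level u \<alpha>. dist a b < \<delta>"
proof -
  have d: "dH (level u \<alpha>) (level v \<alpha>) < \<delta>" using d_inf_ge[OF assms(1-4)] assms(5) by linarith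
  have bd: "bounded (level u \<alpha> \<union> level v \<alpha>)"
    using level_bounded[OF assms(1,3)] level_bounded[OF assms(2,3)] by simp
  have n1: "level u \<alpha> \<noteq> {}" using level_nonempty[OF assms(1,3,4)] .
  have n2: "level v \<alpha> \<noteq> {}" using level_nonempty[OF assms(2,3,4)] .
  show "\<forall>a\<in>level u \<alpha>. \<exists>b\<in>level v \<alpha>. dist a b < \<delta>" by (rule dH_lt(1)[OF n1 n2 bd d])
  show "\<forall>b\<in>level v \<alpha>. \<exists>a\<in>level u \<alpha>. dist a b < \<delta>" by (rule dH_lt(2)[OF n1 n2 bd d])
qed

lemma d_0_le:
  assumes "d_inf u v < \<epsilon>" "0 < \<epsilon>"
  shows "d_0 u v < \<epsilon>"
proof -
  define e where "e = (max (d_inf u v) 0 + \<epsilon>) / 2"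
  have e: "e > 0" "e < \<epsilon>" "d_inf u v \<le> e" using assms by (auto simp: e_def)
  have idT: "(\<lambda>x. x) \<in> Tset" unfolding Tset_def using homeomorphism_ident
    by (auto simp: strict_mono_on_def)
  have "e \<in> {\<epsilon>. \<epsilon> > 0 \<and> (\<exists>\<xi>\<in>Tset. (\<forall>\<alpha>\<in>{0..1}. \<bar>\<xi> \<alpha> - \<alpha>\<bar> \<le> \<epsilon>) \<and> d_inf u (\<xi> \<circ> v) \<le> \<epsilon>)}"
    using e idT by (auto intro!: bexI[of _ "\<lambda>x. x"] simp: o_def)
  moreover have "bdd_below {\<epsilon>. \<epsilon> > 0 \<and> (\<exists>\<xi>\<in>Tset. (\<forall>\<alpha>\<in>{0..1}. \<bar>\<xi> \<alpha> - \<alpha>\<bar> \<le> \<epsilon>) \<and> d_inf u (\<xi> \<circ> v) \<le> \<epsilon>)}"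
    by (auto intro!: bdd_belowI[of _ 0])
  ultimately have "d_0 u v \<le> e" unfolding d_0_def by (rule cInf_lower)
  then show ?thesis using e by linarith
qed

lemma Tset_ends:
  assumes "\<xi> \<in> Tset"
  shows "\<xi> 0 = 0" "\<xi> 1 = 1"
proof -
  obtain \<eta> where h: "homeomorphism {0..1} {0..1} \<xi> \<eta>" and sm: "strict_mono_on {0..1} \<xi>"
    using assms by (auto simp: Tset_def)
  have img: "\<xi> ` {0..1} = {0..1::real}" using h by (simp add: homeomorphism_def)
  have mono: "\<xi> a \<le> \<xi> b" if "a \<in> {0..1}" "b \<in> {0..1}" "a \<le> b" for a b
    using sm that by (cases "a = b") (auto simp: strict_mono_on_def less_le)
  obtain a where a: "a \<in> {0..1}" "\<xi> a = 0" using img by (metis atLeastAtMost_iff imageE order_refl zero_le_one)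
  obtain b where b: "b \<in> {0..1}" "\<xi> b = 1" using img by (metis atLeastAtMost_iff imageE order_refl zero_le_one)
  have "\<xi> 0 \<le> \<xi> a" using mono[of 0 a] a by auto
  moreover have "\<xi> 0 \<in> {0..1}" using img by auto
  ultimately show "\<xi> 0 = 0" using a by auto
  have "\<xi> b \<le> \<xi> 1" using mono[of b 1] b by auto
  moreover have "\<xi> 1 \<in> {0..1}" using img by auto
  ultimately show "\<xi> 1 = 1" using b by auto
qed

lemma d_0_chi:
  assumes "d_0 u (chi K) < \<delta>"
  shows "d_inf u (chi K) < \<delta>"
proof -
  define S where "S = {\<epsilon>. \<epsilon> > 0 \<and> (\<exists>\<xi>\<in>Tset. (\<forall>\<alpha>\<in>{0..1}. \<bar>\<xi> \<alpha> - \<alpha>\<bar> \<le> \<epsilon>) \<and> d_inf u (\<xi> \<circ> chi K) \<le> \<epsilon>)}"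
  have idT: "(\<lambda>x. x) \<in> Tset" unfolding Tset_def using homeomorphism_ident
    by (auto simp: strict_mono_on_def)
  define e0 where "e0 = max (d_inf u (chi K)) 0 + 1"
  have c: "(\<lambda>x. x) \<circ> chi K = chi K" by (simp add: o_def)
  have e0: "e0 > 0" "d_inf u ((\<lambda>x. x) \<circ> chi K) \<le> e0" "\<forall>\<alpha>\<in>{0..1::real}. \<bar>\<alpha> - \<alpha>\<bar> \<le> e0"
    unfolding e0_def c by auto
  have "e0 \<in> S" unfolding S_def mem_Collect_eq
    apply (rule conjI[OF e0(1)])
    apply (rule bexI[OF _ idT])
    using e0(2,3) by simp
  then have ne: "S \<noteq> {}" by blast
  have "Inf S < \<delta>" using assms by (simp add: d_0_def S_def)
  then obtain e where e: "e \<in> S" "e < \<delta>" using cInf_lessD[OF ne] by blast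
  then obtain \<xi> where xi: "\<xi> \<in> Tset" "d_inf u (\<xi> \<circ> chi K) \<le> e" unfolding S_def by blast
  have "\<xi> \<circ> chi K = chi K"
  proof
    fix x show "(\<xi> \<circ> chi K) x = chi K x" using Tset_ends[OF xi(1)] by (simp add: chi_def)
  qed
  then show ?thesis using xi e by simp
qed



lemma level_mem:
  assumes "u \<in> Fspace" "0 < \<alpha>"
  shows "x \<in> level u \<alpha> \<longleftrightarrow> u x \<ge> \<alpha>"
  using assms by (simp add: level_def)

lemma sendo_mem:
  assumes "u \<in> Fspace"
  shows "(x, \<alpha>) \<in> sendo u \<longleftrightarrow> \<alpha> \<in> {0..1} \<and> x \<in> level u \<alpha>"
proof (cases "\<alpha> = 0")
  case True then show ?thesis using FspaceD(1)[OF assms] by (auto simp: sendo_def endo_def)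
next
  case False
  show ?thesis
  proof
    assume "(x, \<alpha>) \<in> sendo u"
    then show "\<alpha> \<in> {0..1} \<and> x \<in> level u \<alpha>" using False by (auto simp: sendo_def endo_def level_def)
  next
    assume h: "\<alpha> \<in> {0..1} \<and> x \<in> level u \<alpha>"
    then have "x \<in> level u 0" using level_sub0[OF assms, of \<alpha>] by auto
    then show "(x, \<alpha>) \<in> sendo u" using h False by (auto simp: sendo_def endo_def level_def)
  qed
qed

lemma endo_mem_pos:
  assumes "u \<in> Fspace" "0 < \<alpha>"
  shows "(x, \<alpha>) \<in> endo u \<longleftrightarrow> \<alpha> \<le> 1 \<and> x \<in> level u \<alpha>"
  using assms by (auto simp: endo_def level_def)

lemma dbar_same: "dbar (x, \<alpha>) (y, \<alpha>) = dist x y"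
  by (simp add: dbar_def)

lemma dbar_nonneg: "0 \<le> dbar p q"
  by (simp add: dbar_def)

lemma le_eps: "(\<And>\<eta>. 0 < \<eta> \<Longrightarrow> (a::real) \<le> b + \<eta>) \<Longrightarrow> a \<le> b"
  by (metis add.commute dense_le_bounded field_le_epsilon)

lemma d_S_le:
  assumes "u \<in> Fspace" "v \<in> Fspace"
  shows "d_S u v \<le> d_inf u v"
proof (rule le_eps)
  fix \<eta> :: real assume \<eta>: "0 < \<eta>"
  let ?c = "d_inf u v + \<eta>"
  have lt: "d_inf u v < ?c" using \<eta> by simp
  obtain x1 where x1: "x1 \<in> level u 1" using FspaceD(5)[OF assms(1)] by blast
  obtain y1 where y1: "y1 \<in> level v 1" using FspaceD(5)[OF assms(2)] by blast
  have n1: "sendo u \<noteq> {}" using x1 sendo_mem[OF assms(1), of x1 1] by auto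
  have n2: "sendo v \<noteq> {}" using y1 sendo_mem[OF assms(2), of y1 1] by auto
  have h1: "\<forall>a\<in>sendo u. \<exists>b\<in>sendo v. dbar a b \<le> ?c"
  proof
    fix a assume a: "a \<in> sendo u"
    obtain x \<alpha> where xa: "a = (x, \<alpha>)" by (cases a)
    have m: "\<alpha> \<in> {0..1}" "x \<in> level u \<alpha>" using a xa sendo_mem[OF assms(1)] by auto
    obtain y where y: "y \<in> level v \<alpha>" "dist x y < ?c"
      using d_inf_lt_close(1)[OF assms, of \<alpha> ?c] m lt by auto
    have "(y, \<alpha>) \<in> sendo v" using sendo_mem[OF assms(2)] m y by auto
    moreover have "dbar a (y, \<alpha>) \<le> ?c" using y(2) xa by (simp add: dbar_def)
    ultimately show "\<exists>b\<in>sendo v. dbar a b \<le> ?c" by blast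
  qed
  have h2: "\<forall>b\<in>sendo v. \<exists>a\<in>sendo u. dbar a b \<le> ?c"
  proof
    fix b assume b: "b \<in> sendo v"
    obtain y \<alpha> where ya: "b = (y, \<alpha>)" by (cases b)
    have m: "\<alpha> \<in> {0..1}" "y \<in> level v \<alpha>" using b ya sendo_mem[OF assms(2)] by auto
    obtain x where x: "x \<in> level u \<alpha>" "dist x y < ?c"
      using d_inf_lt_close(2)[OF assms, of \<alpha> ?c] m lt by auto
    have "(x, \<alpha>) \<in> sendo u" using sendo_mem[OF assms(1)] m x by auto
    moreover have "dbar (x, \<alpha>) b \<le> ?c" using x(2) ya by (simp add: dbar_def)
    ultimately show "\<exists>a\<in>sendo u. dbar a b \<le> ?c" by blast
  qed
  show "d_S u v \<le> d_inf u v + \<eta>" unfolding d_S_def by (rule hdist_le[OF n1 n2 dbar_nonneg h1 h2])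
qed

lemma d_inf_nonneg:
  assumes "u \<in> Fspace" "v \<in> Fspace"
  shows "0 \<le> d_inf u v"
proof (rule ccontr)
  assume "\<not> 0 \<le> d_inf u v"
  then have "d_inf u v < 0" by simp
  moreover obtain x where "x \<in> level u 0" using level_nonempty[OF assms(1), of 0] by auto
  ultimately obtain y where "dist x y < 0" using d_inf_lt_close(1)[OF assms, of 0 0] by auto
  then show False by simp
qed

lemma d_E_le:
  assumes "u \<in> Fspace" "v \<in> Fspace"
  shows "d_E u v \<le> d_inf u v"
proof (rule le_eps)
  fix \<eta> :: real assume \<eta>: "0 < \<eta>"
  let ?c = "d_inf u v + \<eta>"
  have lt: "d_inf u v < ?c" using \<eta> by simp
  have c0: "0 \<le> ?c" using d_inf_nonneg[OF assms] \<eta> by simp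
  obtain x1 where x1: "x1 \<in> level u 1" using FspaceD(5)[OF assms(1)] by blast
  obtain y1 where y1: "y1 \<in> level v 1" using FspaceD(5)[OF assms(2)] by blast
  have n1: "endo u \<noteq> {}" using x1 endo_mem_pos[OF assms(1), of 1 x1] by auto
  have n2: "endo v \<noteq> {}" using y1 endo_mem_pos[OF assms(2), of 1 y1] by auto
  have h1: "\<forall>a\<in>endo u. \<exists>b\<in>endo v. dbar a b \<le> ?c"
  proof
    fix a assume a: "a \<in> endo u"
    obtain x \<alpha> where xa: "a = (x, \<alpha>)" by (cases a)
    show "\<exists>b\<in>endo v. dbar a b \<le> ?c"
    proof (cases "\<alpha> = 0")
      case True
      have "(x, 0) \<in> endo v" using FspaceD(1)[OF assms(2)] by (auto simp: endo_def)
      then show ?thesis using xa True c0 by (intro bexI[of _ "(x, 0)"]) (auto simp: dbar_def)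
    next
      case False
      then have a0: "0 < \<alpha>" using a xa by (auto simp: endo_def)
      have m: "\<alpha> \<le> 1" "x \<in> level u \<alpha>" using a xa endo_mem_pos[OF assms(1) a0] by auto
      obtain y where y: "y \<in> level v \<alpha>" "dist x y < ?c"
        using d_inf_lt_close(1)[OF assms, of \<alpha> ?c] m lt a0 by auto
      have "(y, \<alpha>) \<in> endo v" using endo_mem_pos[OF assms(2) a0] m y by auto
      moreover have "dbar a (y, \<alpha>) \<le> ?c" using y(2) xa by (simp add: dbar_def)
      ultimately show ?thesis by blast
    qed
  qed
  have h2: "\<forall>b\<in>endo v. \<exists>a\<in>endo u. dbar a b \<le> ?c"
  proof
    fix b assume b: "b \<in> endo v"
    obtain y \<alpha> where ya: "b = (y, \<alpha>)" by (cases b)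
    show "\<exists>a\<in>endo u. dbar a b \<le> ?c"
    proof (cases "\<alpha> = 0")
      case True
      have "(y, 0) \<in> endo u" using FspaceD(1)[OF assms(1)] by (auto simp: endo_def)
      then show ?thesis using ya True c0 by (intro bexI[of _ "(y, 0)"]) (auto simp: dbar_def)
    next
      case False
      then have a0: "0 < \<alpha>" using b ya by (auto simp: endo_def)
      have m: "\<alpha> \<le> 1" "y \<in> level v \<alpha>" using b ya endo_mem_pos[OF assms(2) a0] by auto
      obtain x where x: "x \<in> level u \<alpha>" "dist x y < ?c"
        using d_inf_lt_close(2)[OF assms, of \<alpha> ?c] m lt a0 by auto
      have "(x, \<alpha>) \<in> endo u" using endo_mem_pos[OF assms(1) a0] m x by auto
      moreover have "dbar (x, \<alpha>) b \<le> ?c" using x(2) ya by (simp add: dbar_def)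
      ultimately show ?thesis by blast
    qed
  qed
  show "d_E u v \<le> d_inf u v + \<eta>" unfolding d_E_def by (rule hdist_le[OF n1 n2 dbar_nonneg h1 h2])
qed



definition close :: "real \<Rightarrow> 'a::metric_space set \<Rightarrow> 'a set \<Rightarrow> bool" where
  "close \<delta> A B \<longleftrightarrow> (\<forall>a\<in>A. \<exists>b\<in>B. dist a b < \<delta>) \<and> (\<forall>b\<in>B. \<exists>a\<in>A. dist a b < \<delta>)"

lemma KspaceD: "K \<in> Kspace \<Longrightarrow> compact K \<and> K \<noteq> {}"
  by (simp add: Kspace_def)

lemma level_chi_K: "K \<in> Kspace \<Longrightarrow> 0 \<le> \<alpha> \<Longrightarrow> \<alpha> \<le> 1 \<Longrightarrow> level (chi K) \<alpha> = K"
  using level_chi compact_imp_closed KspaceD by blast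

lemma dinf_chi_close:
  assumes "u \<in> Fspace" "K \<in> Kspace" "d_inf u (chi K) < \<delta>"
  shows "close \<delta> (level u (1/2)) K"
  using d_inf_lt_close[OF assms(1) chi_F[OF assms(2)], of "1/2" \<delta>] assms(3) level_chi_K[OF assms(2), of "1/2"]
  by (simp add: close_def)

lemma d0_chi_close:
  assumes "u \<in> Fspace" "K \<in> Kspace" "d_0 u (chi K) < \<delta>"
  shows "close \<delta> (level u (1/2)) K"
  using dinf_chi_close[OF assms(1,2) d_0_chi[OF assms(3)]] .

lemma dS_chi_close:
  assumes "u \<in> Fspace" "K \<in> Kspace" "0 < \<delta>" "\<delta> \<le> 1/4" "d_S u (chi K) < \<delta>"
  shows "close \<delta> (level u (1/2)) K"
proof -
  have cF: "chi K \<in> Fspace" using chi_F[OF assms(2)] .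
  have K: "compact K" "K \<noteq> {}" using KspaceD[OF assms(2)] by auto
  have bd: "bounded (level u 0 \<union> K)" using level_bounded[OF assms(1), of 0] compact_imp_bounded[OF K(1)] by simp
  obtain C where C: "\<forall>a\<in>level u 0. \<forall>b\<in>K. dist a b \<le> C" using bounded_dist_bound[OF bd] by blast
  obtain k0 where k0: "k0 \<in> K" using K by blast
  obtain x1 where x1: "x1 \<in> level u 1" using FspaceD(5)[OF assms(1)] by blast
  have x10: "x1 \<in> level u 0" using level_sub0[OF assms(1), of 1] x1 by auto
  have lc: "\<And>\<alpha>. 0 \<le> \<alpha> \<Longrightarrow> \<alpha> \<le> 1 \<Longrightarrow> level (chi K) \<alpha> = K" using level_chi_K[OF assms(2)] by blast
  have k0s: "(k0, 1) \<in> sendo (chi K)" using sendo_mem[OF cF] lc[of 1] k0 by simp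
  have x1s: "(x1, 1) \<in> sendo u" using sendo_mem[OF assms(1)] x1 by simp
  have n1: "sendo u \<noteq> {}" using x1s by blast
  have n2: "sendo (chi K) \<noteq> {}" using k0s by blast
  have h1: "\<forall>a\<in>sendo u. \<exists>b\<in>sendo (chi K). dbar a b \<le> max C 1"
  proof
    fix a assume a: "a \<in> sendo u"
    obtain x \<alpha> where xa: "a = (x, \<alpha>)" by (cases a)
    have m: "\<alpha> \<in> {0..1}" "x \<in> level u 0" using a xa by (auto simp: sendo_def)
    have "dist x k0 \<le> C" using C m(2) k0 by blast
    then have "dbar a (k0, 1) \<le> max C 1" using m xa by (auto simp: dbar_def)
    then show "\<exists>b\<in>sendo (chi K). dbar a b \<le> max C 1" using k0s by blast
  qed
  have h2: "\<forall>b\<in>sendo (chi K). \<exists>a\<in>sendo u. dbar a b \<le> max C 1"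
  proof
    fix b assume b: "b \<in> sendo (chi K)"
    obtain y \<alpha> where ya: "b = (y, \<alpha>)" by (cases b)
    have m: "\<alpha> \<in> {0..1}" "y \<in> K" using b ya lc[of 0] by (auto simp: sendo_def)
    have "dist x1 y \<le> C" using C m(2) x10 by blast
    then have "dbar (x1, 1) b \<le> max C 1" using m ya by (auto simp: dbar_def)
    then show "\<exists>a\<in>sendo u. dbar a b \<le> max C 1" using x1s by blast
  qed
  have r: "\<forall>a\<in>sendo u. \<exists>b\<in>sendo (chi K). dbar a b < \<delta>" "\<forall>b\<in>sendo (chi K). \<exists>a\<in>sendo u. dbar a b < \<delta>"
    using hdist_lt[OF n1 n2 dbar_nonneg h1 h2] assms(5) unfolding d_S_def by blast+
  have c1: "\<exists>b\<in>K. dist x b < \<delta>" if x: "x \<in> level u (1/2)" for x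
  proof -
    have "(x, 1/2) \<in> sendo u" using sendo_mem[OF assms(1)] x by simp
    then obtain b where b: "b \<in> sendo (chi K)" "dbar (x, 1/2) b < \<delta>" using r(1) by blast
    obtain y \<beta> where yb: "b = (y, \<beta>)" by (cases b)
    have d: "dist x y < \<delta>" "\<bar>1/2 - \<beta>\<bar> < \<delta>" using b(2) yb by (auto simp: dbar_def)
    have m: "\<beta> \<in> {0..1}" "y \<in> level (chi K) \<beta>" using b(1) yb sendo_mem[OF cF] by auto
    have "y \<in> K" using m lc[of \<beta>] by simp
    then show ?thesis using d by blast
  qed
  have c2: "\<exists>a\<in>level u (1/2). dist a y < \<delta>" if y: "y \<in> K" for y
  proof -
    have "(y, 1) \<in> sendo (chi K)" using sendo_mem[OF cF] lc[of 1] y by simp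
    then obtain a where a: "a \<in> sendo u" "dbar a (y, 1) < \<delta>" using r(2) by blast
    obtain x \<beta> where xb: "a = (x, \<beta>)" by (cases a)
    have d: "dist x y < \<delta>" "\<bar>\<beta> - 1\<bar> < \<delta>" using a(2) xb by (auto simp: dbar_def)
    have m: "\<beta> \<in> {0..1}" "x \<in> level u \<beta>" using a(1) xb sendo_mem[OF assms(1)] by auto
    have "\<beta> \<ge> 1/2" using d(2) assms(4) by linarith
    then have "x \<in> level u (1/2)" using level_mono[OF assms(1), of "1/2" \<beta>] m by auto
    then show ?thesis using d by blast
  qed
  show ?thesis unfolding close_def using c1 c2 by blast
qed

lemma dE_chi_close:
  assumes "u \<in> Fspace" "K \<in> Kspace" "0 < \<delta>" "\<delta> \<le> 1/4" "d_E u (chi K) < \<delta>"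
  shows "close \<delta> (level u (1/2)) K"
proof -
  have cF: "chi K \<in> Fspace" using chi_F[OF assms(2)] .
  have K: "compact K" "K \<noteq> {}" using KspaceD[OF assms(2)] by auto
  have bd: "bounded (level u 0 \<union> K)" using level_bounded[OF assms(1), of 0] compact_imp_bounded[OF K(1)] by simp
  obtain C where C: "\<forall>a\<in>level u 0. \<forall>b\<in>K. dist a b \<le> C" using bounded_dist_bound[OF bd] by blast
  obtain k0 where k0: "k0 \<in> K" using K by blast
  obtain x1 where x1: "x1 \<in> level u 1" using FspaceD(5)[OF assms(1)] by blast
  have x10: "x1 \<in> level u 0" using level_sub0[OF assms(1), of 1] x1 by auto
  have lc: "\<And>\<alpha>. 0 \<le> \<alpha> \<Longrightarrow> \<alpha> \<le> 1 \<Longrightarrow> level (chi K) \<alpha> = K" using level_chi_K[OF assms(2)] by blast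
  have k0s: "(k0, 1) \<in> endo (chi K)" using endo_mem_pos[OF cF] lc[of 1] k0 by simp
  have x1s: "(x1, 1) \<in> endo u" using endo_mem_pos[OF assms(1)] x1 by simp
  have n1: "endo u \<noteq> {}" using x1s by blast
  have n2: "endo (chi K) \<noteq> {}" using k0s by blast
  have M0: "0 \<le> max C 1" by simp
  have h1: "\<forall>a\<in>endo u. \<exists>b\<in>endo (chi K). dbar a b \<le> max C 1"
  proof
    fix a assume a: "a \<in> endo u"
    obtain x \<alpha> where xa: "a = (x, \<alpha>)" by (cases a)
    show "\<exists>b\<in>endo (chi K). dbar a b \<le> max C 1"
    proof (cases "\<alpha> = 0")
      case True
      have "(x, 0) \<in> endo (chi K)" by (auto simp: endo_def chi_def)
      moreover have "dbar a (x, 0) \<le> max C 1" using xa True by (simp add: dbar_def)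
      ultimately show ?thesis by blast
    next
      case False
      then have a0: "0 < \<alpha>" using a xa by (auto simp: endo_def)
      have m: "\<alpha> \<le> 1" "x \<in> level u \<alpha>" using a xa endo_mem_pos[OF assms(1) a0] by auto
      have "x \<in> level u 0" using m level_sub0[OF assms(1), of \<alpha>] a0 by auto
      then have "dist x k0 \<le> C" using C k0 by blast
      then have "dbar a (k0, 1) \<le> max C 1" using m a0 xa by (auto simp: dbar_def)
      then show ?thesis using k0s by blast
    qed
  qed
  have h2: "\<forall>b\<in>endo (chi K). \<exists>a\<in>endo u. dbar a b \<le> max C 1"
  proof
    fix b assume b: "b \<in> endo (chi K)"
    obtain y \<alpha> where ya: "b = (y, \<alpha>)" by (cases b)
    show "\<exists>a\<in>endo u. dbar a b \<le> max C 1"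
    proof (cases "\<alpha> = 0")
      case True
      have "(y, 0) \<in> endo u" using FspaceD(1)[OF assms(1)] by (auto simp: endo_def)
      moreover have "dbar (y, 0) b \<le> max C 1" using ya True by (simp add: dbar_def)
      ultimately show ?thesis by blast
    next
      case False
      then have a0: "0 < \<alpha>" using b ya by (auto simp: endo_def)
      have m: "\<alpha> \<le> 1" "y \<in> level (chi K) \<alpha>" using b ya endo_mem_pos[OF cF a0] by auto
      have "y \<in> K" using m lc[of \<alpha>] a0 by simp
      then have "dist x1 y \<le> C" using C x10 by blast
      then have "dbar (x1, 1) b \<le> max C 1" using m a0 ya by (auto simp: dbar_def)
      then show ?thesis using x1s by blast
    qed
  qed
  have r: "\<forall>a\<in>endo u. \<exists>b\<in>endo (chi K). dbar a b < \<delta>" "\<forall>b\<in>endo (chi K). \<exists>a\<in>endo u. dbar a b < \<delta>"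
    using hdist_lt[OF n1 n2 dbar_nonneg h1 h2] assms(5) unfolding d_E_def by blast+
  have c1: "\<exists>b\<in>K. dist x b < \<delta>" if x: "x \<in> level u (1/2)" for x
  proof -
    have "(x, 1/2) \<in> endo u" using endo_mem_pos[OF assms(1)] x by simp
    then obtain b where b: "b \<in> endo (chi K)" "dbar (x, 1/2) b < \<delta>" using r(1) by blast
    obtain y \<beta> where yb: "b = (y, \<beta>)" by (cases b)
    have d: "dist x y < \<delta>" "\<bar>1/2 - \<beta>\<bar> < \<delta>" using b(2) yb by (auto simp: dbar_def)
    have b0: "0 < \<beta>" using d(2) assms(4) by linarith
    have m: "\<beta> \<le> 1" "y \<in> level (chi K) \<beta>" using b(1) yb endo_mem_pos[OF cF b0] by auto
    have "y \<in> K" using m b0 lc[of \<beta>] by simp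
    then show ?thesis using d by blast
  qed
  have c2: "\<exists>a\<in>level u (1/2). dist a y < \<delta>" if y: "y \<in> K" for y
  proof -
    have "(y, 1) \<in> endo (chi K)" using endo_mem_pos[OF cF] lc[of 1] y by simp
    then obtain a where a: "a \<in> endo u" "dbar a (y, 1) < \<delta>" using r(2) by blast
    obtain x \<beta> where xb: "a = (x, \<beta>)" by (cases a)
    have d: "dist x y < \<delta>" "\<bar>\<beta> - 1\<bar> < \<delta>" using a(2) xb by (auto simp: dbar_def)
    have b0: "\<beta> \<ge> 1/2" using d(2) assms(4) by linarith
    have m: "\<beta> \<le> 1" "x \<in> level u \<beta>" using a(1) xb endo_mem_pos[OF assms(1)] b0 by auto
    then have "x \<in> level u (1/2)" using level_mono[OF assms(1), of "1/2" \<beta>] b0 by auto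
    then show ?thesis using d by blast
  qed
  show ?thesis unfolding close_def using c1 c2 by blast
qed



lemma cont_pow:
  fixes f :: "'a::metric_space \<Rightarrow> 'a"
  assumes "continuous_on UNIV f"
  shows "continuous_on UNIV (f ^^ k)"
  by (induction k) (auto intro!: continuous_on_compose2[OF assms(1)] continuous_on_id)

lemma Kspace_pow:
  fixes f :: "'a::metric_space \<Rightarrow> 'a"
  assumes "continuous_on UNIV f" "K \<in> Kspace"
  shows "(f ^^ k) ` K \<in> Kspace"
  using compact_continuous_image[OF continuous_on_subset[OF cont_pow[OF assms(1)]] conjunct1[OF KspaceD[OF assms(2)]]]
    KspaceD[OF assms(2)] by (auto simp: Kspace_def)

lemma close_dH:
  assumes "close \<delta> A B" "A \<noteq> {}" "B \<noteq> {}"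
  shows "dH A B \<le> \<delta>"
  using assms unfolding close_def by (intro dH_le) (auto intro: less_imp_le)

lemma spec_to_K:
  fixes f :: "'a::metric_space \<Rightarrow> 'a"
  assumes contf: "continuous_on UNIV f" and sp: "spec_prop Fspace M (zadeh f)"
    and cl: "\<And>u K \<delta>. u \<in> Fspace \<Longrightarrow> K \<in> Kspace \<Longrightarrow> 0 < \<delta> \<Longrightarrow> \<delta> \<le> 1/4 \<Longrightarrow> M u (chi K) < \<delta>
       \<Longrightarrow> close \<delta> (level u (1/2)) K"
  shows "spec_prop Kspace dH (fbar f)"
  unfolding spec_prop_alt
proof (intro allI impI)
  fix \<epsilon> :: real assume \<epsilon>: "0 < \<epsilon>"
  define \<delta> where "\<delta> = min (\<epsilon>/2) (1/4)"
  have \<delta>: "0 < \<delta>" "\<delta> \<le> 1/4" "\<delta> < \<epsilon>" using \<epsilon> by (auto simp: \<delta>_def)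
  obtain N where N: "N \<ge> 1" "\<And>s y i j. spec_hyp Fspace N s y i j \<Longrightarrow> spec_concl Fspace M (zadeh f) \<delta> N s y i j"
    using sp \<delta>(1) unfolding spec_prop_alt by meson
  show "\<exists>N\<ge>1. \<forall>s y i j. spec_hyp Kspace N s y i j \<longrightarrow> spec_concl Kspace dH (fbar f) \<epsilon> N s y i j"
  proof (intro exI[of _ N] conjI allI impI)
    show "N \<ge> 1" by (rule N(1))
    fix s :: nat and y :: "nat \<Rightarrow> 'a set" and i j :: "nat \<Rightarrow> nat"
    assume H: "spec_hyp Kspace N s y i j"
    define y' where "y' = (\<lambda>r. chi (y r) :: 'a \<Rightarrow> real)"
    have yK: "\<forall>r\<in>{1..s}. y r \<in> Kspace" using H by (simp add: spec_hyp_def)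
    have "\<forall>r\<in>{1..s}. y' r \<in> Fspace" using yK chi_F unfolding y'_def by blast
    then have "spec_hyp Fspace N s y' i j" using H unfolding spec_hyp_def by simp
    then have "spec_concl Fspace M (zadeh f) \<delta> N s y' i j" by (rule N(2))
    then obtain w where w: "w \<in> Fspace"
      "\<forall>r\<in>{1..s}. \<forall>k\<in>{i r..j r}. M ((zadeh f ^^ k) w) ((zadeh f ^^ k) (y' r)) < \<delta>"
      "(zadeh f ^^ (N + j s)) w = w"
      unfolding spec_concl_def by (elim bexE conjE) assumption
    define x where "x = level w (1/2)"
    have xK: "x \<in> Kspace" unfolding x_def Kspace_def
      using level_compact[OF w(1), of "1/2"] level_nonempty[OF w(1), of "1/2"] by simp
    have it: "(fbar f ^^ k) x = level ((zadeh f ^^ k) w) (1/2)" for k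
      unfolding fbar_pow x_def using zadeh_pow_level[OF contf w(1), of "1/2" k] by simp
    have "\<forall>r\<in>{1..s}. \<forall>k\<in>{i r..j r}. dH ((fbar f ^^ k) x) ((fbar f ^^ k) (y r)) < \<epsilon>"
    proof (intro ballI)
      fix r k assume r: "r \<in> {1..s}" and k: "k \<in> {i r..j r}"
      have yr: "y r \<in> Kspace" using yK r by blast
      have m: "M ((zadeh f ^^ k) w) (chi ((f ^^ k) ` y r)) < \<delta>"
      proof -
        have "M ((zadeh f ^^ k) w) ((zadeh f ^^ k) (y' r)) < \<delta>" using w(2) r k by blast
        then show ?thesis using zadeh_pow_chi[OF contf yr, of k] unfolding y'_def by simp
      qed
      have wk: "(zadeh f ^^ k) w \<in> Fspace" using zadeh_pow_F[OF contf w(1)] .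
      have fK: "(f ^^ k) ` y r \<in> Kspace" using Kspace_pow[OF contf yr] .
      have c: "close \<delta> (level ((zadeh f ^^ k) w) (1/2)) ((f ^^ k) ` y r)"
        using cl[OF wk fK \<delta>(1,2) m] .
      have "dH (level ((zadeh f ^^ k) w) (1/2)) ((f ^^ k) ` y r) \<le> \<delta>"
        using close_dH[OF c] level_nonempty[OF wk, of "1/2"] KspaceD[OF fK] by simp
      then show "dH ((fbar f ^^ k) x) ((fbar f ^^ k) (y r)) < \<epsilon>"
        using it[of k] \<delta>(3) unfolding fbar_pow[of k f "y r"] by simp
    qed
    moreover have "(fbar f ^^ (N + j s)) x = x" using it[of "N + j s"] w(3) x_def by simp
    ultimately show "spec_concl Kspace dH (fbar f) \<epsilon> N s y i j"
      unfolding spec_concl_def using xK by (intro bexI[of _ x]) auto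
  qed
qed



lemma right_lemma:
  assumes v: "v \<in> Fspace" and a: "0 \<le> \<alpha>" "\<alpha> < 1" and e: "0 < \<epsilon>"
  shows "\<exists>\<gamma>. \<alpha> < \<gamma> \<and> \<gamma> \<le> 1 \<and> (\<forall>x\<in>closure {x. v x > \<alpha>}. \<exists>y\<in>level v \<gamma>. dist x y < \<epsilon>)"
proof -
  let ?R = "closure {x. v x > \<alpha>}"
  have "{x. v x > \<alpha>} \<subseteq> {x. v x > 0}" using a by auto
  then have "?R \<subseteq> level v 0" by (simp add: level_def closure_mono)
  then have cR: "compact ?R" using FspaceD(4)[OF v]
    by (metis closed_closure compact_Int_closed inf.absorb_iff2)
  have cov: "?R \<subseteq> (\<Union>x\<in>{x. v x > \<alpha>}. ball x \<epsilon>)"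
  proof
    fix z assume "z \<in> ?R"
    then obtain y where "y \<in> {x. v x > \<alpha>}" "dist y z < \<epsilon>" using closure_approachable e by blast
    then show "z \<in> (\<Union>x\<in>{x. v x > \<alpha>}. ball x \<epsilon>)" by auto
  qed
  obtain X where X: "X \<subseteq> {x. v x > \<alpha>}" "finite X" "?R \<subseteq> (\<Union>x\<in>X. ball x \<epsilon>)"
    using compactE_image[OF cR _ cov] by blast
  define \<gamma> where "\<gamma> = Min (insert 1 (v ` X))"
  have g1: "\<gamma> \<le> 1" unfolding \<gamma>_def using X(2) by simp
  have "\<gamma> \<in> insert 1 (v ` X)" unfolding \<gamma>_def using X(2) by (intro Min_in) auto
  then have g2: "\<alpha> < \<gamma>" using X(1) a by auto
  have g3: "\<gamma> \<le> v x" if "x \<in> X" for x unfolding \<gamma>_def using X(2) that by simp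
  show ?thesis
  proof (intro exI conjI ballI)
    show "\<alpha> < \<gamma>" "\<gamma> \<le> 1" using g1 g2 by auto
    fix z assume "z \<in> ?R"
    then obtain x where x: "x \<in> X" "dist x z < \<epsilon>" using X(3) by auto
    have "x \<in> level v \<gamma>" using g3[OF x(1)] g2 a by (auto simp: level_def)
    then show "\<exists>y\<in>level v \<gamma>. dist z y < \<epsilon>" using x(2) by (auto simp: dist_commute)
  qed
qed

lemma left_lemma:
  assumes v: "v \<in> Fspace" and a: "0 < \<alpha>" "\<alpha> \<le> 1" and e: "0 < \<epsilon>"
  shows "\<exists>\<delta>>0. \<delta> \<le> \<alpha> \<and> (\<forall>\<gamma>. \<alpha> - \<delta> < \<gamma> \<longrightarrow> \<gamma> \<le> \<alpha> \<longrightarrow> (\<forall>x\<in>level v \<gamma>. \<exists>y\<in>level v \<alpha>. dist x y < \<epsilon>))"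
proof -
  define T where "T = (\<Union>y\<in>level v \<alpha>. ball y \<epsilon>)"
  have oT: "open T" unfolding T_def by auto
  define K where "K = level v (\<alpha>/2) \<inter> - T"
  have cK: "compact K" unfolding K_def using level_compact[OF v, of "\<alpha>/2"] a oT
    by (intro compact_Int_closed) (auto simp: closed_def)
  have "\<forall>y\<in>K. v y < \<alpha>"
  proof
    fix y assume y: "y \<in> K"
    show "v y < \<alpha>"
    proof (rule ccontr)
      assume "\<not> v y < \<alpha>"
      then have "y \<in> level v \<alpha>" using a by (auto simp: level_def)
      moreover have "y \<in> ball y \<epsilon>" using e by simp
      ultimately have "y \<in> T" unfolding T_def by blast
      then show False using y by (auto simp: K_def)
    qed
  qed
  then obtain c where c: "c < \<alpha>" "\<forall>y\<in>K. v y < c" using usc_max_lt[OF cK FspaceD(3)[OF v]] by blast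
  define c' where "c' = max c (\<alpha>/2)"
  show ?thesis
  proof (intro exI[of _ "\<alpha> - c'"] conjI allI impI ballI)
    show "0 < \<alpha> - c'" "\<alpha> - c' \<le> \<alpha>" using c a by (auto simp: c'_def)
    fix \<gamma> x assume g: "\<alpha> - (\<alpha> - c') < \<gamma>" "\<gamma> \<le> \<alpha>" and x: "x \<in> level v \<gamma>"
    have g0: "\<gamma> > 0" using g a by (auto simp: c'_def)
    have vx: "v x \<ge> \<gamma>" using x g0 by (simp add: level_def)
    have "v x > c'" using vx g by simp
    then have x2: "x \<in> level v (\<alpha>/2)" using a by (auto simp: level_def c'_def)
    have "x \<in> T"
    proof (rule ccontr)
      assume "x \<notin> T"
      then have "x \<in> K" using x2 by (simp add: K_def)
      then have "v x < c" using c by blast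
      then show False using \<open>v x > c'\<close> by (simp add: c'_def)
    qed
    then show "\<exists>y\<in>level v \<alpha>. dist x y < \<epsilon>" unfolding T_def by (auto simp: dist_commute)
  qed
qed

lemma level_sub_gt:
  assumes "0 \<le> \<alpha>" "\<alpha> < \<gamma>"
  shows "level v \<gamma> \<subseteq> closure {x. v x > \<alpha>}"
proof -
  have "level v \<gamma> \<subseteq> {x. v x > \<alpha>}" using assms by (auto simp: level_def)
  then show ?thesis using closure_subset by blast
qed

definition close1 :: "('a::metric_space \<Rightarrow> real) \<Rightarrow> real \<Rightarrow> real \<Rightarrow> real \<Rightarrow> bool" where
  "close1 v \<epsilon> \<gamma> \<beta> \<longleftrightarrow> (\<forall>x\<in>level v \<gamma>. \<exists>y\<in>level v \<beta>. dist x y < \<epsilon>)"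

lemma local_cover:
  assumes v: "v \<in> Fspace" and e: "0 < \<epsilon>" and a: "\<alpha> \<in> {0..1}"
  shows "\<exists>p::real \<times> real \<times> real set. fst p < \<alpha> \<and> \<alpha> < fst (snd p) \<and> finite (snd (snd p)) \<and>
     snd (snd p) \<subseteq> {0<..1} \<and>
     (\<forall>\<gamma>\<in>{0..1}. fst p < \<gamma> \<and> \<gamma> < fst (snd p) \<longrightarrow> (\<exists>\<beta>\<in>snd (snd p). \<gamma> \<le> \<beta> \<and> close1 v \<epsilon> \<gamma> \<beta>))"
proof -
  consider "\<alpha> = 1" | "0 < \<alpha>" "\<alpha> < 1" | "\<alpha> = 0" using a by fastforce
  then show ?thesis
  proof cases
    case 1
    obtain \<delta> where d: "\<delta> > 0" "\<delta> \<le> 1"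
      "\<forall>\<gamma>. 1 - \<delta> < \<gamma> \<longrightarrow> \<gamma> \<le> 1 \<longrightarrow> (\<forall>x\<in>level v \<gamma>. \<exists>y\<in>level v 1. dist x y < \<epsilon>)"
      using left_lemma[OF v _ _ e, of 1] by auto
    show ?thesis
      using d 1 by (intro exI[of _ "(1 - \<delta>, 2, {1})"]) (auto simp: close1_def)
  next
    case 2
    obtain \<delta> where d: "\<delta> > 0" "\<delta> \<le> \<alpha>"
      "\<forall>\<gamma>. \<alpha> - \<delta> < \<gamma> \<longrightarrow> \<gamma> \<le> \<alpha> \<longrightarrow> (\<forall>x\<in>level v \<gamma>. \<exists>y\<in>level v \<alpha>. dist x y < \<epsilon>)"
      using left_lemma[OF v _ _ e, of \<alpha>] 2 by auto
    obtain g where g: "\<alpha> < g" "g \<le> 1" "\<forall>x\<in>closure {x. v x > \<alpha>}. \<exists>y\<in>level v g. dist x y < \<epsilon>"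
      using right_lemma[OF v _ _ e, of \<alpha>] 2 by auto
    have P: "\<exists>\<beta>\<in>{\<alpha>, g}. \<gamma> \<le> \<beta> \<and> close1 v \<epsilon> \<gamma> \<beta>" if "\<gamma> \<in> {0..1}" "\<alpha> - \<delta> < \<gamma>" "\<gamma> < g" for \<gamma>
    proof (cases "\<gamma> \<le> \<alpha>")
      case True
      then show ?thesis using d(3) that by (auto simp: close1_def)
    next
      case False
      then have "level v \<gamma> \<subseteq> closure {x. v x > \<alpha>}" using level_sub_gt[of \<alpha> \<gamma> v] 2 by auto
      then have "close1 v \<epsilon> \<gamma> g" using g(3) by (auto simp: close1_def)
      then show ?thesis using that by auto
    qed
    show ?thesis
      using d 2 g P by (intro exI[of _ "(\<alpha> - \<delta>, g, {\<alpha>, g})"]) auto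
  next
    case 3
    obtain g where g: "0 < g" "g \<le> 1" "\<forall>x\<in>closure {x. v x > 0}. \<exists>y\<in>level v g. dist x y < \<epsilon>"
      using right_lemma[OF v _ _ e, of 0] by auto
    have P: "\<exists>\<beta>\<in>{g}. \<gamma> \<le> \<beta> \<and> close1 v \<epsilon> \<gamma> \<beta>" if "\<gamma> \<in> {0..1}" "\<gamma> < g" for \<gamma>
    proof (cases "\<gamma> = 0")
      case True
      then show ?thesis using g by (auto simp: close1_def level_def)
    next
      case False
      then have "level v \<gamma> \<subseteq> closure {x. v x > 0}" using level_sub_gt[of 0 \<gamma>] that by auto
      then have "close1 v \<epsilon> \<gamma> g" using g(3) by (auto simp: close1_def)
      then show ?thesis using that by auto
    qed
    show ?thesis
      using g 3 P by (intro exI[of _ "(-1, g, {g})"]) auto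
  qed
qed

definition LC where
  "LC v \<epsilon> \<alpha> (p::real \<times> real \<times> real set) \<longleftrightarrow> fst p < \<alpha> \<and> \<alpha> < fst (snd p) \<and> finite (snd (snd p)) \<and>
     snd (snd p) \<subseteq> {0<..1} \<and>
     (\<forall>\<gamma>\<in>{0..1}. fst p < \<gamma> \<and> \<gamma> < fst (snd p) \<longrightarrow> (\<exists>\<beta>\<in>snd (snd p). \<gamma> \<le> \<beta> \<and> close1 v \<epsilon> \<gamma> \<beta>))"

lemma regulated:
  assumes v: "v \<in> Fspace" and e: "0 < \<epsilon>"
  shows "\<exists>S. finite S \<and> S \<subseteq> {0<..1} \<and> (\<forall>\<alpha>\<in>{0..1}. \<exists>\<beta>\<in>S. \<alpha> \<le> \<beta> \<and> close1 v \<epsilon> \<alpha> \<beta>)"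
proof -
  have ex: "\<forall>\<alpha>\<in>{0..1}. \<exists>p. LC v \<epsilon> \<alpha> p"
  proof
    fix \<alpha> :: real assume a: "\<alpha> \<in> {0..1}"
    show "\<exists>p. LC v \<epsilon> \<alpha> p" unfolding LC_def by (rule local_cover[OF v e a])
  qed
  obtain P where P: "\<forall>\<alpha>\<in>{0..1}. LC v \<epsilon> \<alpha> (P \<alpha>)" using bchoice[OF ex] by blast
  have cov: "{0..1::real} \<subseteq> (\<Union>\<alpha>\<in>{0..1}. {fst (P \<alpha>)<..<fst (snd (P \<alpha>))})"
  proof
    fix \<alpha> :: real assume a: "\<alpha> \<in> {0..1}"
    then have "LC v \<epsilon> \<alpha> (P \<alpha>)" using P by blast
    then have "\<alpha> \<in> {fst (P \<alpha>)<..<fst (snd (P \<alpha>))}" unfolding LC_def by simp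
    then show "\<alpha> \<in> (\<Union>\<alpha>\<in>{0..1}. {fst (P \<alpha>)<..<fst (snd (P \<alpha>))})" using a by blast
  qed
  have opn: "open {fst (P \<alpha>)<..<fst (snd (P \<alpha>))}" for \<alpha> by simp
  obtain C where C: "C \<subseteq> {0..1}" "finite C" "{0..1::real} \<subseteq> (\<Union>\<alpha>\<in>C. {fst (P \<alpha>)<..<fst (snd (P \<alpha>))})"
    using compactE_image[OF compact_Icc opn cov] by metis
  define S where "S = (\<Union>\<alpha>\<in>C. snd (snd (P \<alpha>)))"
  have PC: "LC v \<epsilon> \<alpha> (P \<alpha>)" if "\<alpha> \<in> C" for \<alpha> using P C(1) that by blast
  have "finite S" unfolding S_def using C(2) PC by (auto simp: LC_def)
  moreover have "S \<subseteq> {0<..1}" unfolding S_def using PC by (auto simp: LC_def)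
  moreover have "\<forall>\<gamma>\<in>{0..1}. \<exists>\<beta>\<in>S. \<gamma> \<le> \<beta> \<and> close1 v \<epsilon> \<gamma> \<beta>"
  proof
    fix \<gamma> :: real assume g: "\<gamma> \<in> {0..1}"
    then obtain \<alpha> where al: "\<alpha> \<in> C" "fst (P \<alpha>) < \<gamma>" "\<gamma> < fst (snd (P \<alpha>))" using C(3) by auto
    have "\<forall>\<gamma>\<in>{0..1}. fst (P \<alpha>) < \<gamma> \<and> \<gamma> < fst (snd (P \<alpha>)) \<longrightarrow> (\<exists>\<beta>\<in>snd (snd (P \<alpha>)). \<gamma> \<le> \<beta> \<and> close1 v \<epsilon> \<gamma> \<beta>)"
      using PC[OF al(1)] unfolding LC_def by blast
    then obtain \<beta> where "\<beta> \<in> snd (snd (P \<alpha>))" "\<gamma> \<le> \<beta> \<and> close1 v \<epsilon> \<gamma> \<beta>" using al g by blast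
    then show "\<exists>\<beta>\<in>S. \<gamma> \<le> \<beta> \<and> close1 v \<epsilon> \<gamma> \<beta>" unfolding S_def using al(1) by blast
  qed
  ultimately show ?thesis by blast
qed



lemma K_to_F:
  fixes f :: "'a::metric_space \<Rightarrow> 'a"
  assumes contf: "continuous_on UNIV f" and sp: "spec_prop Kspace dH (fbar f)"
  shows "spec_prop Fspace d_inf (zadeh f)"
  unfolding spec_prop_alt
proof (intro allI impI)
  fix \<epsilon> :: real assume \<epsilon>: "0 < \<epsilon>"
  define \<epsilon>1 where "\<epsilon>1 = \<epsilon> / 4"
  have e1: "0 < \<epsilon>1" using \<epsilon> by (simp add: \<epsilon>1_def)
  obtain N where N: "N \<ge> 1" "\<And>s y i j. spec_hyp Kspace N s y i j \<Longrightarrow> spec_concl Kspace dH (fbar f) \<epsilon>1 N s y i j"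
    using sp e1 unfolding spec_prop_alt by meson
  show "\<exists>N\<ge>1. \<forall>s y i j. spec_hyp Fspace N s y i j \<longrightarrow> spec_concl Fspace d_inf (zadeh f) \<epsilon> N s y i j"
  proof (intro exI[of _ N] conjI allI impI)
    show "N \<ge> 1" by (rule N(1))
    fix s :: nat and u :: "nat \<Rightarrow> 'a \<Rightarrow> real" and i j :: "nat \<Rightarrow> nat"
    assume H: "spec_hyp Fspace N s u i j"
    have uF: "u r \<in> Fspace" if "r \<in> {1..s}" for r using H that unfolding spec_hyp_def by blast
    have cK: "compact ((f ^^ k) ` A)" if "compact A" for A k
      using compact_continuous_image[OF continuous_on_subset[OF cont_pow[OF contf]] that] by blast
    define PR where "PR = Sigma {1..s} (\<lambda>r. {i r..j r})"
    have finPR: "finite PR" unfolding PR_def by auto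
    have exS: "\<forall>p\<in>PR. \<exists>S. finite S \<and> S \<subseteq> {0<..1} \<and>
        (\<forall>\<alpha>\<in>{0..1}. \<exists>\<beta>\<in>S. \<alpha> \<le> \<beta> \<and> close1 ((zadeh f ^^ snd p) (u (fst p))) \<epsilon>1 \<alpha> \<beta>)"
    proof
      fix p assume "p \<in> PR"
      then have "fst p \<in> {1..s}" unfolding PR_def by auto
      then show "\<exists>S. finite S \<and> S \<subseteq> {0<..1} \<and>
        (\<forall>\<alpha>\<in>{0..1}. \<exists>\<beta>\<in>S. \<alpha> \<le> \<beta> \<and> close1 ((zadeh f ^^ snd p) (u (fst p))) \<epsilon>1 \<alpha> \<beta>)"
        using regulated[OF zadeh_pow_F[OF contf uF] e1] by blast
    qed
    obtain SS where SS: "\<forall>p\<in>PR. finite (SS p) \<and> SS p \<subseteq> {0<..1} \<and>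
        (\<forall>\<alpha>\<in>{0..1}. \<exists>\<beta>\<in>SS p. \<alpha> \<le> \<beta> \<and> close1 ((zadeh f ^^ snd p) (u (fst p))) \<epsilon>1 \<alpha> \<beta>)"
      using bchoice[OF exS] by blast
    define S where "S = insert 1 (\<Union>(SS ` PR))"
    have finS: "finite S" unfolding S_def using finPR SS by auto
    have S01: "S \<subseteq> {0<..1}" unfolding S_def using SS by auto
    have S1: "1 \<in> S" unfolding S_def by simp
    have exP: "\<forall>\<beta>\<in>S. \<exists>P. P \<in> Kspace \<and> (\<forall>r\<in>{1..s}. \<forall>k\<in>{i r..j r}.
        dH ((fbar f ^^ k) P) ((fbar f ^^ k) (level (u r) \<beta>)) < \<epsilon>1) \<and> (fbar f ^^ (N + j s)) P = P"
    proof
      fix \<beta> assume "\<beta> \<in> S"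
      then have b: "0 < \<beta>" "\<beta> \<le> 1" using S01 by auto
      have "\<forall>r\<in>{1..s}. level (u r) \<beta> \<in> Kspace"
        using level_compact[OF uF] level_nonempty[OF uF] b by (auto simp: Kspace_def)
      then have "spec_hyp Kspace N s (\<lambda>r. level (u r) \<beta>) i j" using H unfolding spec_hyp_def by simp
      then have "spec_concl Kspace dH (fbar f) \<epsilon>1 N s (\<lambda>r. level (u r) \<beta>) i j" by (rule N(2))
      then obtain P where "P \<in> Kspace" "(\<forall>r\<in>{1..s}. \<forall>k\<in>{i r..j r}.
        dH ((fbar f ^^ k) P) ((fbar f ^^ k) (level (u r) \<beta>)) < \<epsilon>1)" "(fbar f ^^ (N + j s)) P = P"
        unfolding spec_concl_def by (elim bexE conjE) simp
      then show "\<exists>P. P \<in> Kspace \<and> (\<forall>r\<in>{1..s}. \<forall>k\<in>{i r..j r}.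
        dH ((fbar f ^^ k) P) ((fbar f ^^ k) (level (u r) \<beta>)) < \<epsilon>1) \<and> (fbar f ^^ (N + j s)) P = P"
        by blast
    qed
    obtain PP where PP: "\<forall>\<beta>\<in>S. PP \<beta> \<in> Kspace \<and> (\<forall>r\<in>{1..s}. \<forall>k\<in>{i r..j r}.
        dH ((fbar f ^^ k) (PP \<beta>)) ((fbar f ^^ k) (level (u r) \<beta>)) < \<epsilon>1) \<and> (fbar f ^^ (N + j s)) (PP \<beta>) = PP \<beta>"
      using bchoice[OF exP] by blast
    have PPK: "PP \<beta> \<in> Kspace" if "\<beta> \<in> S" for \<beta> using PP that by blast
    have PPc: "dH ((f ^^ k) ` PP \<beta>) ((f ^^ k) ` level (u r) \<beta>) < \<epsilon>1"
      if "\<beta> \<in> S" "r \<in> {1..s}" "k \<in> {i r..j r}" for \<beta> r k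
    proof -
      have "dH ((fbar f ^^ k) (PP \<beta>)) ((fbar f ^^ k) (level (u r) \<beta>)) < \<epsilon>1" using PP that by blast
      then show ?thesis unfolding fbar_pow .
    qed
    have PPp: "(f ^^ (N + j s)) ` PP \<beta> = PP \<beta>" if "\<beta> \<in> S" for \<beta>
    proof -
      have "(fbar f ^^ (N + j s)) (PP \<beta>) = PP \<beta>" using PP that by blast
      then show ?thesis unfolding fbar_pow .
    qed
    define Q where "Q \<alpha> = (\<Union>\<beta>\<in>{\<beta>\<in>S. \<alpha> \<le> \<beta>}. PP \<beta>)" for \<alpha>
    define w where "w x = Max (insert 0 {\<beta>\<in>S. x \<in> PP \<beta>})" for x
    have finW: "finite (insert 0 {\<beta>\<in>S. x \<in> PP \<beta>})" for x using finS by simp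
    have w_ge: "\<alpha> \<le> w x \<longleftrightarrow> (\<exists>\<beta>\<in>S. \<alpha> \<le> \<beta> \<and> x \<in> PP \<beta>)" if a: "0 < \<alpha>" for \<alpha> x
      unfolding w_def using a by (subst Max_ge_iff[OF finW]) auto
    have w0: "0 \<le> w x" for x unfolding w_def by (subst Max_ge_iff[OF finW]) auto
    have w1: "w x \<le> 1" for x unfolding w_def using finW[of x] S01 by (subst Max_le_iff) auto
    have Qc: "compact (Q \<alpha>)" for \<alpha> unfolding Q_def using finS PPK KspaceD by (intro compact_UN) auto
    have levw: "level w \<alpha> = Q \<alpha>" if a: "0 \<le> \<alpha>" for \<alpha>
    proof (cases "\<alpha> = 0")
      case True
      have "{x. w x > 0} = Q 0"
      proof safe
        fix x assume "0 < w x"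
        then obtain \<beta> where "\<beta> \<in> S" "w x \<le> \<beta>" "x \<in> PP \<beta>" using w_ge[of "w x" x] by auto
        moreover then have "0 \<le> \<beta>" using S01 by auto
        ultimately show "x \<in> Q 0" unfolding Q_def by blast
      next
        fix x assume "x \<in> Q 0"
        then obtain \<beta> where "\<beta> \<in> S" "x \<in> PP \<beta>" unfolding Q_def by auto
        moreover then have "0 < \<beta>" using S01 by auto
        ultimately have "\<beta> \<le> w x" using w_ge[of \<beta> x] by auto
        then show "0 < w x" using \<open>0 < \<beta>\<close> by linarith
      qed
      then show ?thesis using True closure_closed[OF compact_imp_closed[OF Qc[of 0]]]
        by (simp add: level_def)
    next
      case False
      then show ?thesis using w_ge[of \<alpha>] a unfolding Q_def by (auto simp: level_def)
    qed
    have wF: "w \<in> Fspace"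
    proof -
      have "closed {x. w x \<ge> a}" for a
      proof (cases "a > 0")
        case True
        then have "{x. w x \<ge> a} = level w a" by (simp add: level_def)
        then show ?thesis using levw[of a] Qc[of a] True compact_imp_closed by auto
      next
        case False
        have "a \<le> w x" for x using w0[of x] False by linarith
        then have "{x. w x \<ge> a} = UNIV" by auto
        then show ?thesis by simp
      qed
      then have "usc w" by (rule closed_usc)
      moreover have "compact (level w 0)" using levw[of 0] Qc[of 0] by simp
      moreover have "level w 1 \<noteq> {}"
      proof -
        have "PP 1 \<subseteq> Q 1" unfolding Q_def using S1 by auto
        then show ?thesis using levw[of 1] KspaceD[OF PPK[OF S1]] by auto
      qed
      ultimately show ?thesis using w0 w1 by (auto simp: Fspace_def)
    qed
    have per: "(zadeh f ^^ (N + j s)) w = w"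
    proof (rule F_eqI[OF zadeh_pow_F[OF contf wF] wF])
      fix \<alpha> :: real assume a: "0 < \<alpha>"
      have "level ((zadeh f ^^ (N + j s)) w) \<alpha> = (f ^^ (N + j s)) ` Q \<alpha>"
        using zadeh_pow_level[OF contf wF, of \<alpha>] levw[of \<alpha>] a by simp
      also have "\<dots> = Q \<alpha>" unfolding Q_def image_UN using PPp by auto
      finally show "level ((zadeh f ^^ (N + j s)) w) \<alpha> = level w \<alpha>" using levw[of \<alpha>] a by simp
    qed
    have cl: "d_inf ((zadeh f ^^ k) w) ((zadeh f ^^ k) (u r)) < \<epsilon>"
      if r: "r \<in> {1..s}" and k: "k \<in> {i r..j r}" for r k
    proof -
      define v where "v = (zadeh f ^^ k) (u r)"
      define wk where "wk = (zadeh f ^^ k) w"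
      have vF: "v \<in> Fspace" unfolding v_def using zadeh_pow_F[OF contf uF[OF r]] .
      have wkF: "wk \<in> Fspace" unfolding wk_def using zadeh_pow_F[OF contf wF] .
      have pr: "(r, k) \<in> PR" unfolding PR_def using r k by auto
      have lev: "dH (level wk \<alpha>) (level v \<alpha>) \<le> 2 * \<epsilon>1" if a: "\<alpha> \<in> {0..1}" for \<alpha>
      proof (rule dH_le)
        have lw: "level wk \<alpha> = (f ^^ k) ` Q \<alpha>" unfolding wk_def
          using zadeh_pow_level[OF contf wF, of \<alpha>] levw[of \<alpha>] a by simp
        have lv: "level v \<beta> = (f ^^ k) ` level (u r) \<beta>" if "0 \<le> \<beta>" for \<beta>
          unfolding v_def using zadeh_pow_level[OF contf uF[OF r] that] .
        show "level wk \<alpha> \<noteq> {}" using level_nonempty[OF wkF] a by auto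
        show "level v \<alpha> \<noteq> {}" using level_nonempty[OF vF] a by auto
        show "\<forall>x\<in>level wk \<alpha>. \<exists>y\<in>level v \<alpha>. dist x y \<le> 2 * \<epsilon>1"
        proof
          fix x assume "x \<in> level wk \<alpha>"
          then obtain \<beta> p where bp: "\<beta> \<in> S" "\<alpha> \<le> \<beta>" "p \<in> PP \<beta>" "x = (f ^^ k) p"
            unfolding lw Q_def by auto
          have b01: "0 < \<beta>" "\<beta> \<le> 1" using S01 bp(1) by auto
          have A: "(f ^^ k) ` PP \<beta> \<noteq> {}" "compact ((f ^^ k) ` PP \<beta>)"
            using KspaceD[OF PPK[OF bp(1)]] cK by auto
          have B: "(f ^^ k) ` level (u r) \<beta> \<noteq> {}" "compact ((f ^^ k) ` level (u r) \<beta>)"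
            using level_nonempty[OF uF[OF r]] level_compact[OF uF[OF r]] cK b01 by auto
          have bd: "bounded ((f ^^ k) ` PP \<beta> \<union> (f ^^ k) ` level (u r) \<beta>)"
            using A(2) B(2) compact_imp_bounded by auto
          have "x \<in> (f ^^ k) ` PP \<beta>" using bp by auto
          then obtain y where y: "y \<in> (f ^^ k) ` level (u r) \<beta>" "dist x y < \<epsilon>1"
            using dH_lt(1)[OF A(1) B(1) bd PPc[OF bp(1) r k]] by blast
          have "level (u r) \<beta> \<subseteq> level (u r) \<alpha>" using level_mono[OF uF[OF r], of \<alpha> \<beta>] a bp(2) by auto
          then have "y \<in> level v \<alpha>" using y(1) lv[of \<alpha>] a by auto
          then show "\<exists>y\<in>level v \<alpha>. dist x y \<le> 2 * \<epsilon>1" using y(2) e1 by (intro bexI[of _ y]) auto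
        qed
        show "\<forall>y\<in>level v \<alpha>. \<exists>x\<in>level wk \<alpha>. dist x y \<le> 2 * \<epsilon>1"
        proof
          fix b assume b: "b \<in> level v \<alpha>"
          have "\<forall>\<alpha>\<in>{0..1}. \<exists>\<beta>\<in>SS (r, k). \<alpha> \<le> \<beta> \<and> close1 v \<epsilon>1 \<alpha> \<beta>"
            using SS pr unfolding v_def by auto
          then obtain \<beta> where bt: "\<beta> \<in> SS (r, k)" "\<alpha> \<le> \<beta>" "close1 v \<epsilon>1 \<alpha> \<beta>" using a by blast
          have bS: "\<beta> \<in> S" unfolding S_def using bt(1) pr by blast
          have b01: "0 < \<beta>" "\<beta> \<le> 1" using S01 bS by auto
          obtain y where y: "y \<in> level v \<beta>" "dist b y < \<epsilon>1" using bt(3) b unfolding close1_def by blast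
          have A: "(f ^^ k) ` PP \<beta> \<noteq> {}" "compact ((f ^^ k) ` PP \<beta>)"
            using KspaceD[OF PPK[OF bS]] cK by auto
          have B: "(f ^^ k) ` level (u r) \<beta> \<noteq> {}" "compact ((f ^^ k) ` level (u r) \<beta>)"
            using level_nonempty[OF uF[OF r]] level_compact[OF uF[OF r]] cK b01 by auto
          have bd: "bounded ((f ^^ k) ` PP \<beta> \<union> (f ^^ k) ` level (u r) \<beta>)"
            using A(2) B(2) compact_imp_bounded by auto
          have "y \<in> (f ^^ k) ` level (u r) \<beta>" using y(1) lv[of \<beta>] b01 by auto
          then obtain x where x: "x \<in> (f ^^ k) ` PP \<beta>" "dist x y < \<epsilon>1"
            using dH_lt(2)[OF A(1) B(1) bd PPc[OF bS r k]] by blast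
          have "(f ^^ k) ` PP \<beta> \<subseteq> (f ^^ k) ` Q \<alpha>" unfolding Q_def using bS bt(2) by auto
          then have xw: "x \<in> level wk \<alpha>" using x(1) lw by auto
          have "dist x b \<le> dist x y + dist y b" by (rule dist_triangle)
          also have "\<dots> < 2 * \<epsilon>1" using x(2) y(2) by (simp add: dist_commute)
          finally show "\<exists>x\<in>level wk \<alpha>. dist x b \<le> 2 * \<epsilon>1" using xw by (intro bexI[of _ x]) auto
        qed
      qed
      have "d_inf wk v \<le> 2 * \<epsilon>1" unfolding d_inf_def by (rule cSUP_least) (use lev in auto)
      then show ?thesis using \<epsilon> unfolding wk_def v_def \<epsilon>1_def by simp
    qed
    show "spec_concl Fspace d_inf (zadeh f) \<epsilon> N s u i j"
      unfolding spec_concl_def using wF per cl by (intro bexI[of _ w]) auto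
  qed
qed



theorem theorem4p3:
  fixes f :: "'a::metric_space \<Rightarrow> 'a"
  assumes "continuous_on UNIV f"
  shows "(spec_prop Kspace dH (fbar f) \<longleftrightarrow> spec_prop Fspace d_inf (zadeh f))
       \<and> (spec_prop Kspace dH (fbar f) \<longleftrightarrow> spec_prop Fspace d_0 (zadeh f))
       \<and> (spec_prop Kspace dH (fbar f) \<longleftrightarrow> spec_prop Fspace d_S (zadeh f))
       \<and> (spec_prop Kspace dH (fbar f) \<longleftrightarrow> spec_prop Fspace d_E (zadeh f))"
proof -
  have zF: "\<forall>a\<in>Fspace. zadeh f a \<in> Fspace" using zadeh_F[OF assms] by blast
  have i2: "spec_prop Kspace dH (fbar f) \<Longrightarrow> spec_prop Fspace d_inf (zadeh f)"
    by (rule K_to_F[OF assms])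
  have 1: "spec_prop Kspace dH (fbar f) \<longleftrightarrow> spec_prop Fspace d_inf (zadeh f)"
  proof
    assume "spec_prop Fspace d_inf (zadeh f)"
    then show "spec_prop Kspace dH (fbar f)"
      by (rule spec_to_K[OF assms]) (rule dinf_chi_close)
  qed (rule i2)
  have 2: "spec_prop Kspace dH (fbar f) \<longleftrightarrow> spec_prop Fspace d_0 (zadeh f)"
  proof
    assume "spec_prop Kspace dH (fbar f)"
    then have "spec_prop Fspace d_inf (zadeh f)" by (rule i2)
    then show "spec_prop Fspace d_0 (zadeh f)"
      by (rule spec_transfer[OF _ zF]) (rule d_0_le)
  next
    assume "spec_prop Fspace d_0 (zadeh f)"
    then show "spec_prop Kspace dH (fbar f)"
      by (rule spec_to_K[OF assms]) (rule d0_chi_close)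
  qed
  have 3: "spec_prop Kspace dH (fbar f) \<longleftrightarrow> spec_prop Fspace d_S (zadeh f)"
  proof
    assume "spec_prop Kspace dH (fbar f)"
    then have "spec_prop Fspace d_inf (zadeh f)" by (rule i2)
    then show "spec_prop Fspace d_S (zadeh f)"
    proof (rule spec_transfer[OF _ zF])
      fix a b and \<epsilon> :: real assume "a \<in> Fspace" "b \<in> Fspace" "d_inf a b < \<epsilon>"
      then show "d_S a b < \<epsilon>" using d_S_le[of a b] by linarith
    qed
  next
    assume "spec_prop Fspace d_S (zadeh f)"
    then show "spec_prop Kspace dH (fbar f)"
      by (rule spec_to_K[OF assms]) (rule dS_chi_close)
  qed
  have 4: "spec_prop Kspace dH (fbar f) \<longleftrightarrow> spec_prop Fspace d_E (zadeh f)"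
  proof
    assume "spec_prop Kspace dH (fbar f)"
    then have "spec_prop Fspace d_inf (zadeh f)" by (rule i2)
    then show "spec_prop Fspace d_E (zadeh f)"
    proof (rule spec_transfer[OF _ zF])
      fix a b and \<epsilon> :: real assume "a \<in> Fspace" "b \<in> Fspace" "d_inf a b < \<epsilon>"
      then show "d_E a b < \<epsilon>" using d_E_le[of a b] by linarith
    qed
  next
    assume "spec_prop Fspace d_E (zadeh f)"
    then show "spec_prop Kspace dH (fbar f)"
      by (rule spec_to_K[OF assms]) (rule dE_chi_close)
  qed
  show ?thesis using 1 2 3 4 by blast
qed


end
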